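(* Let $R$ be a commutative noetherian ring, $M$ any $R$-module and $N$ a finitely generated $R$-module. Then $\operatorname{Att}_R(M\otimes_R N)=\operatorname{Att}_R(M)\cap\operatorname{Supp}_R(N)$.
   Context: A prime ideal $\mathfrak{p}$ is attached to an $R$-module $M$ if $\mathfrak{p}=\operatorname{Ann}_R(M/U)$ for some submodule $U\subseteq M$, equivalently $\mathfrak{p}=\operatorname{Ann}_R(M/\mathfrak{p}M)$; $\operatorname{Att}_R(M)$ denotes the set of attached primes. *)

theory Defs
  imports "HOL-Algebra.Algebra"
begin

text \<open>Ann_R(M/U) for a submodule U of M, written out without forming the quotient.\<close>
definition ann_quot :: "('a, 'r) ring_scheme \<Rightarrow> ('a, 'm, 'x) module_scheme \<Rightarrow> 'm set \<Rightarrow> 'a set" where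
  "ann_quot R M U = {r \<in> carrier R. \<forall>x \<in> carrier M. r \<odot>\<^bsub>M\<^esub> x \<in> U}"

definition Att :: "('a, 'r) ring_scheme \<Rightarrow> ('a, 'm, 'x) module_scheme \<Rightarrow> 'a set set" where
  "Att R M = {P. primeideal P R \<and> (\<exists>U. submodule U R M \<and> P = ann_quot R M U)}"

text \<open>Support: primes p with N_p \<noteq> 0. An element x/s of N_p is zero iff t x = 0 for
  some t outside p, so N_p \<noteq> 0 iff some x in N is killed by no t outside p.\<close>
definition Supp :: "('a, 'r) ring_scheme \<Rightarrow> ('a, 'm, 'x) module_scheme \<Rightarrow> 'a set set" where
  "Supp R N = {P. primeideal P R \<and>
     (\<exists>x \<in> carrier N. \<forall>t \<in> carrier R - P. t \<odot>\<^bsub>N\<^esub> x \<noteq> \<zero>\<^bsub>N\<^esub>)}"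

definition fin_gen_module :: "('a, 'r) ring_scheme \<Rightarrow> ('a, 'm, 'x) module_scheme \<Rightarrow> bool" where
  "fin_gen_module R N \<longleftrightarrow> (\<exists>S. finite S \<and> S \<subseteq> carrier N \<and>
     (\<forall>x \<in> carrier N. \<exists>a. a \<in> S \<rightarrow> carrier R \<and> x = (\<Oplus>\<^bsub>N\<^esub> s \<in> S. a s \<odot>\<^bsub>N\<^esub> s)))"

definition free_mod :: "('a, 'r) ring_scheme \<Rightarrow> 'c set \<Rightarrow> ('a, 'c \<Rightarrow> 'a) module" where
  "free_mod R A = \<lparr>carrier = {f. (\<forall>x. f x \<in> carrier R) \<and> finite {x. f x \<noteq> \<zero>\<^bsub>R\<^esub>}
                                     \<and> {x. f x \<noteq> \<zero>\<^bsub>R\<^esub>} \<subseteq> A},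
                   monoid.mult = (\<lambda>f g. undefined), one = undefined,
                   ring.zero = (\<lambda>x. \<zero>\<^bsub>R\<^esub>),
                   ring.add = (\<lambda>f g x. f x \<oplus>\<^bsub>R\<^esub> g x),
                   module.smult = (\<lambda>r f x. r \<otimes>\<^bsub>R\<^esub> f x)\<rparr>"

definition delta :: "('a, 'r) ring_scheme \<Rightarrow> 'c \<Rightarrow> 'c \<Rightarrow> 'a" where
  "delta R c = (\<lambda>x. if x = c then \<one>\<^bsub>R\<^esub> else \<zero>\<^bsub>R\<^esub>)"

definition tensor_rels :: "('a, 'r) ring_scheme \<Rightarrow> ('a, 'm, 'x) module_scheme \<Rightarrow> ('a, 'n, 'y) module_scheme
    \<Rightarrow> ('m \<times> 'n \<Rightarrow> 'a) set" where
  "tensor_rels R M N =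
     {(\<lambda>z. delta R (m \<oplus>\<^bsub>M\<^esub> m', n) z \<ominus>\<^bsub>R\<^esub> delta R (m, n) z \<ominus>\<^bsub>R\<^esub> delta R (m', n) z)
        | m m' n. m \<in> carrier M \<and> m' \<in> carrier M \<and> n \<in> carrier N}
   \<union> {(\<lambda>z. delta R (m, n \<oplus>\<^bsub>N\<^esub> n') z \<ominus>\<^bsub>R\<^esub> delta R (m, n) z \<ominus>\<^bsub>R\<^esub> delta R (m, n') z)
        | m n n'. m \<in> carrier M \<and> n \<in> carrier N \<and> n' \<in> carrier N}
   \<union> {(\<lambda>z. delta R (r \<odot>\<^bsub>M\<^esub> m, n) z \<ominus>\<^bsub>R\<^esub> r \<otimes>\<^bsub>R\<^esub> delta R (m, n) z)
        | r m n. r \<in> carrier R \<and> m \<in> carrier M \<and> n \<in> carrier N}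
   \<union> {(\<lambda>z. delta R (m, r \<odot>\<^bsub>N\<^esub> n) z \<ominus>\<^bsub>R\<^esub> r \<otimes>\<^bsub>R\<^esub> delta R (m, n) z)
        | r m n. r \<in> carrier R \<and> m \<in> carrier M \<and> n \<in> carrier N}"

definition tensor_kernel :: "('a, 'r) ring_scheme \<Rightarrow> ('a, 'm, 'x) module_scheme \<Rightarrow> ('a, 'n, 'y) module_scheme
    \<Rightarrow> ('m \<times> 'n \<Rightarrow> 'a) set" where
  "tensor_kernel R M N =
     \<Inter>{U. submodule U R (free_mod R (carrier M \<times> carrier N)) \<and> tensor_rels R M N \<subseteq> U}"

definition tensor_cls :: "('a, 'r) ring_scheme \<Rightarrow> ('a, 'm, 'x) module_scheme \<Rightarrow> ('a, 'n, 'y) module_scheme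
    \<Rightarrow> ('m \<times> 'n \<Rightarrow> 'a) \<Rightarrow> ('m \<times> 'n \<Rightarrow> 'a) set" where
  "tensor_cls R M N f = {g \<in> carrier (free_mod R (carrier M \<times> carrier N)).
      (\<lambda>z. g z \<ominus>\<^bsub>R\<^esub> f z) \<in> tensor_kernel R M N}"

definition tensor :: "('a, 'r) ring_scheme \<Rightarrow> ('a, 'm, 'x) module_scheme \<Rightarrow> ('a, 'n, 'y) module_scheme
    \<Rightarrow> ('a, ('m \<times> 'n \<Rightarrow> 'a) set) module" where
  "tensor R M N = \<lparr>carrier = tensor_cls R M N ` carrier (free_mod R (carrier M \<times> carrier N)),
      monoid.mult = (\<lambda>C D. undefined), one = undefined,
      ring.zero = tensor_cls R M N (\<lambda>z. \<zero>\<^bsub>R\<^esub>),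
      ring.add = (\<lambda>C D. {g \<in> carrier (free_mod R (carrier M \<times> carrier N)).
                \<exists>f \<in> C. \<exists>h \<in> D. (\<lambda>z. g z \<ominus>\<^bsub>R\<^esub> (f z \<oplus>\<^bsub>R\<^esub> h z)) \<in> tensor_kernel R M N}),
      module.smult = (\<lambda>r C. {g \<in> carrier (free_mod R (carrier M \<times> carrier N)).
                \<exists>f \<in> C. (\<lambda>z. g z \<ominus>\<^bsub>R\<^esub> r \<otimes>\<^bsub>R\<^esub> f z) \<in> tensor_kernel R M N})\<rparr>"

end

theory Submission
  imports Defs
begin
lemma free_mod_simps:
  "carrier (free_mod R A) = {f. (\<forall>x. f x \<in> carrier R) \<and> finite {x. f x \<noteq> \<zero>\<^bsub>R\<^esub>} \<and> {x. f x \<noteq> \<zero>\<^bsub>R\<^esub>} \<subseteq> A}"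
  "\<zero>\<^bsub>free_mod R A\<^esub> = (\<lambda>x. \<zero>\<^bsub>R\<^esub>)"
  "f \<oplus>\<^bsub>free_mod R A\<^esub> g = (\<lambda>x. f x \<oplus>\<^bsub>R\<^esub> g x)"
  "r \<odot>\<^bsub>free_mod R A\<^esub> f = (\<lambda>x. r \<otimes>\<^bsub>R\<^esub> f x)"
  by (simp_all add: free_mod_def)

lemma free_mod_module:
  assumes R: "cring R"
  shows "module R (free_mod R A)"
proof -
  interpret R: cring R by fact
  have fin: "finite {x. f x \<oplus>\<^bsub>R\<^esub> g x \<noteq> \<zero>\<^bsub>R\<^esub>}" if "finite {x. f x \<noteq> \<zero>\<^bsub>R\<^esub>}" "finite {x. g x \<noteq> \<zero>\<^bsub>R\<^esub>}"
    "\<forall>x. f x \<in> carrier R" "\<forall>x. g x \<in> carrier R" for f g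
    by (rule finite_subset[of _ "{x. f x \<noteq> \<zero>\<^bsub>R\<^esub>} \<union> {x. g x \<noteq> \<zero>\<^bsub>R\<^esub>}"]) (use that in auto)
  have cl: "(\<lambda>x. f x \<oplus>\<^bsub>R\<^esub> g x) \<in> carrier (free_mod R A)" if "f \<in> carrier (free_mod R A)" "g \<in> carrier (free_mod R A)" for f g
  proof -
    have "{x. f x \<oplus>\<^bsub>R\<^esub> g x \<noteq> \<zero>\<^bsub>R\<^esub>} \<subseteq> {x. f x \<noteq> \<zero>\<^bsub>R\<^esub>} \<union> {x. g x \<noteq> \<zero>\<^bsub>R\<^esub>}"
      using that by (auto simp: free_mod_simps)
    then show ?thesis using that fin[of f g] by (auto simp: free_mod_simps)
  qed
  have sm: "(\<lambda>x. r \<otimes>\<^bsub>R\<^esub> f x) \<in> carrier (free_mod R A)" if "f \<in> carrier (free_mod R A)" "r \<in> carrier R" for f r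
  proof -
    have "{x. r \<otimes>\<^bsub>R\<^esub> f x \<noteq> \<zero>\<^bsub>R\<^esub>} \<subseteq> {x. f x \<noteq> \<zero>\<^bsub>R\<^esub>}" using that by (auto simp: free_mod_simps)
    then show ?thesis using that by (auto simp: free_mod_simps intro: finite_subset)
  qed
  have ng: "(\<lambda>x. \<ominus>\<^bsub>R\<^esub> f x) \<in> carrier (free_mod R A)" if "f \<in> carrier (free_mod R A)" for f
  proof -
    have "{x. \<ominus>\<^bsub>R\<^esub> f x \<noteq> \<zero>\<^bsub>R\<^esub>} \<subseteq> {x. f x \<noteq> \<zero>\<^bsub>R\<^esub>}" using that by (auto simp: free_mod_simps)
    then show ?thesis using that by (auto simp: free_mod_simps intro: finite_subset)
  qed
  show ?thesis
  proof (rule moduleI[OF R], rule abelian_groupI)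
    fix x y assume "x \<in> carrier (free_mod R A)" "y \<in> carrier (free_mod R A)"
    then show "x \<oplus>\<^bsub>free_mod R A\<^esub> y \<in> carrier (free_mod R A)" using cl by (simp add: free_mod_simps)
  next
    show "\<zero>\<^bsub>free_mod R A\<^esub> \<in> carrier (free_mod R A)" by (simp add: free_mod_simps)
  next
    fix x y z assume "x \<in> carrier (free_mod R A)" "y \<in> carrier (free_mod R A)" "z \<in> carrier (free_mod R A)"
    then show "x \<oplus>\<^bsub>free_mod R A\<^esub> y \<oplus>\<^bsub>free_mod R A\<^esub> z = x \<oplus>\<^bsub>free_mod R A\<^esub> (y \<oplus>\<^bsub>free_mod R A\<^esub> z)"
      by (auto simp: free_mod_simps R.a_assoc)
  next
    fix x y assume "x \<in> carrier (free_mod R A)" "y \<in> carrier (free_mod R A)"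
    then show "x \<oplus>\<^bsub>free_mod R A\<^esub> y = y \<oplus>\<^bsub>free_mod R A\<^esub> x"
      by (auto simp: free_mod_simps R.a_comm)
  next
    fix x assume "x \<in> carrier (free_mod R A)"
    then show "\<zero>\<^bsub>free_mod R A\<^esub> \<oplus>\<^bsub>free_mod R A\<^esub> x = x" by (auto simp: free_mod_simps)
  next
    fix x assume x: "x \<in> carrier (free_mod R A)"
    show "\<exists>y\<in>carrier (free_mod R A). y \<oplus>\<^bsub>free_mod R A\<^esub> x = \<zero>\<^bsub>free_mod R A\<^esub>"
      by (rule bexI[of _ "\<lambda>z. \<ominus>\<^bsub>R\<^esub> x z"]) (use x ng in \<open>auto simp: free_mod_simps R.l_neg\<close>)
  next
    fix a x assume "a \<in> carrier R" "x \<in> carrier (free_mod R A)"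
    then show "a \<odot>\<^bsub>free_mod R A\<^esub> x \<in> carrier (free_mod R A)" using sm by (simp add: free_mod_simps)
  next
    fix a b x assume "a \<in> carrier R" "b \<in> carrier R" "x \<in> carrier (free_mod R A)"
    then show "(a \<oplus>\<^bsub>R\<^esub> b) \<odot>\<^bsub>free_mod R A\<^esub> x = a \<odot>\<^bsub>free_mod R A\<^esub> x \<oplus>\<^bsub>free_mod R A\<^esub> b \<odot>\<^bsub>free_mod R A\<^esub> x"
      by (auto simp: free_mod_simps R.l_distr)
  next
    fix a x y assume "a \<in> carrier R" "x \<in> carrier (free_mod R A)" "y \<in> carrier (free_mod R A)"
    then show "a \<odot>\<^bsub>free_mod R A\<^esub> (x \<oplus>\<^bsub>free_mod R A\<^esub> y) = a \<odot>\<^bsub>free_mod R A\<^esub> x \<oplus>\<^bsub>free_mod R A\<^esub> a \<odot>\<^bsub>free_mod R A\<^esub> y"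
      by (auto simp: free_mod_simps R.r_distr)
  next
    fix a b x assume "a \<in> carrier R" "b \<in> carrier R" "x \<in> carrier (free_mod R A)"
    then show "(a \<otimes>\<^bsub>R\<^esub> b) \<odot>\<^bsub>free_mod R A\<^esub> x = a \<odot>\<^bsub>free_mod R A\<^esub> (b \<odot>\<^bsub>free_mod R A\<^esub> x)"
      by (auto simp: free_mod_simps R.m_assoc)
  next
    fix x assume "x \<in> carrier (free_mod R A)"
    then show "\<one>\<^bsub>R\<^esub> \<odot>\<^bsub>free_mod R A\<^esub> x = x" by (auto simp: free_mod_simps)
  qed
qed

lemma (in abelian_group) r_neg3: "x \<in> carrier G \<Longrightarrow> y \<in> carrier G \<Longrightarrow> x \<oplus> (y \<oplus> \<ominus> x) = y"
proof -
  assume xy: "x \<in> carrier G" "y \<in> carrier G"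
  then have "x \<oplus> (y \<oplus> \<ominus> x) = x \<oplus> (\<ominus> x \<oplus> y)" using a_comm[of y "\<ominus> x"] by simp
  then show ?thesis using r_neg2 xy by simp
qed
lemma (in cring) H1: assumes "a \<in> carrier R" "b \<in> carrier R" "c \<in> carrier R" shows "a \<ominus> c = (a \<ominus> b) \<oplus> (b \<ominus> c)"
  using assms by (simp add: a_minus_def a_ac r_neg1 r_neg2 r_neg3)
lemma (in cring) H2: assumes "a \<in> carrier R" "b \<in> carrier R" "c \<in> carrier R" shows "a \<ominus> b = (a \<ominus> c) \<ominus> (b \<ominus> c)"
  using assms by (simp add: a_minus_def minus_add a_ac r_neg1 r_neg2 r_neg3)
lemma (in cring) H3: assumes "h \<in> carrier R" "f \<in> carrier R" "g \<in> carrier R" "f' \<in> carrier R" "g' \<in> carrier R"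
  shows "h \<ominus> (f \<oplus> g) = ((h \<ominus> (f' \<oplus> g')) \<oplus> (f' \<ominus> f)) \<oplus> (g' \<ominus> g)"
proof -
  have e1: "(f' \<ominus> f) \<oplus> (g' \<ominus> g) = (f' \<oplus> g') \<ominus> (f \<oplus> g)"
    using assms by (simp add: a_minus_def minus_add a_ac)
  have "((h \<ominus> (f' \<oplus> g')) \<oplus> (f' \<ominus> f)) \<oplus> (g' \<ominus> g) = (h \<ominus> (f' \<oplus> g')) \<oplus> ((f' \<ominus> f) \<oplus> (g' \<ominus> g))"
    using assms by (simp add: a_assoc)
  also have "\<dots> = (h \<ominus> (f' \<oplus> g')) \<oplus> ((f' \<oplus> g') \<ominus> (f \<oplus> g))" using e1 by simp
  also have "\<dots> = h \<ominus> (f \<oplus> g)" using H1[of h "f' \<oplus> g'" "f \<oplus> g"] assms by simp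
  finally show ?thesis by simp
qed
lemma (in cring) H4: assumes "h \<in> carrier R" "f \<in> carrier R" "r \<in> carrier R" "f' \<in> carrier R"
  shows "h \<ominus> r \<otimes> f = (h \<ominus> r \<otimes> f') \<oplus> r \<otimes> (f' \<ominus> f)"
  using assms by (simp add: a_minus_def r_distr r_minus a_ac r_neg1 r_neg2 r_neg3)
lemma (in cring) H5: assumes "a \<in> carrier R" "b \<in> carrier R" "c \<in> carrier R"
  shows "a \<ominus> (b \<oplus> c) = a \<ominus> b \<ominus> c"
  using assms by (simp add: a_minus_def minus_add a_ac)

lemma (in cring) H6: assumes "a \<in> carrier R" "b \<in> carrier R"
  shows "a \<ominus> (a \<ominus> b) = b"
  using assms by (simp add: minus_eq minus_add a_assoc[symmetric] r_neg)
lemma (in cring) H7: assumes "a \<in> carrier R" "b \<in> carrier R"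
  shows "(a \<ominus> b) \<oplus> b = a"
  using assms by (simp add: minus_eq a_assoc l_neg)

locale tsetup = R: cring R + M: module R M + N: module R N
  for R :: "('a, 'r) ring_scheme" (structure)
  and M :: "('a, 'm, 'x) module_scheme"
  and N :: "('a, 'n, 'y) module_scheme"
begin

abbreviation "F \<equiv> free_mod R (carrier M \<times> carrier N)"
abbreviation "K \<equiv> tensor_kernel R M N"
abbreviation "cls \<equiv> tensor_cls R M N"
abbreviation "T \<equiv> tensor R M N"

sublocale F: module R F
  by (rule free_mod_module) (rule R.is_cring)

lemma Fcar: "f \<in> carrier F \<Longrightarrow> f z \<in> carrier R"
  unfolding free_mod_simps mem_Collect_eq by blast

lemma F_neg: "f \<in> carrier F \<Longrightarrow> \<ominus>\<^bsub>F\<^esub> f = (\<lambda>z. \<ominus> f z)"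
proof -
  assume f: "f \<in> carrier F"
  have c: "(\<lambda>z. \<ominus> f z) \<in> carrier F"
  proof -
    have "{x. \<ominus> f x \<noteq> \<zero>} \<subseteq> {x. f x \<noteq> \<zero>}" using f by (auto simp: free_mod_simps)
    then show ?thesis using f by (auto simp: free_mod_simps intro: finite_subset)
  qed
  have "(\<lambda>z. \<ominus> f z) \<oplus>\<^bsub>F\<^esub> f = \<zero>\<^bsub>F\<^esub>"
    unfolding free_mod_simps by (rule ext) (rule R.l_neg[OF Fcar[OF f]])
  then show ?thesis using F.minus_equality[OF _ f c] by simp
qed

lemma F_sub: "f \<in> carrier F \<Longrightarrow> g \<in> carrier F \<Longrightarrow> f \<ominus>\<^bsub>F\<^esub> g = (\<lambda>z. f z \<ominus> g z)"
  by (simp add: a_minus_def F_neg free_mod_simps)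

lemma F_add: "f \<oplus>\<^bsub>F\<^esub> g = (\<lambda>z. f z \<oplus> g z)"
  and F_smult: "r \<odot>\<^bsub>F\<^esub> f = (\<lambda>z. r \<otimes> f z)"
  and F_zero: "\<zero>\<^bsub>F\<^esub> = (\<lambda>z. \<zero>)"
  by (simp_all add: free_mod_simps)

lemma delta_car: "m \<in> carrier M \<Longrightarrow> n \<in> carrier N \<Longrightarrow> delta R (m, n) \<in> carrier F"
proof -
  assume mn: "m \<in> carrier M" "n \<in> carrier N"
  have sub: "{x. delta R (m, n) x \<noteq> \<zero>} \<subseteq> {(m, n)}" by (auto simp: delta_def)
  have "\<forall>x. delta R (m, n) x \<in> carrier R" by (simp add: delta_def)
  moreover have "finite {x. delta R (m, n) x \<noteq> \<zero>}" using sub by (rule finite_subset) simp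
  moreover have "{x. delta R (m, n) x \<noteq> \<zero>} \<subseteq> carrier M \<times> carrier N" using sub mn by blast
  ultimately show ?thesis unfolding free_mod_simps by blast
qed

lemma F_sub_car: "f \<in> carrier F \<Longrightarrow> g \<in> carrier F \<Longrightarrow> (\<lambda>z. f z \<ominus> g z) \<in> carrier F"
  using F.minus_closed[of f g] F_sub[of f g] by simp

lemma F_smult_car: "f \<in> carrier F \<Longrightarrow> r \<in> carrier R \<Longrightarrow> (\<lambda>z. r \<otimes> f z) \<in> carrier F"
  using F.smult_closed[of r f] F_smult[of r f] by simp

lemma rels_car: "tensor_rels R M N \<subseteq> carrier F"
  unfolding tensor_rels_def
  apply (intro Un_least subsetI; elim CollectE exE conjE; simp only:)
  apply (intro F_sub_car F_smult_car delta_car M.add.m_closed N.add.m_closed M.smult_closed N.smult_closed; assumption)+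
  done

lemma sub_zero: "submodule HH R F \<Longrightarrow> \<zero>\<^bsub>F\<^esub> \<in> HH"
proof -
  assume h: "submodule HH R F"
  obtain a where a: "a \<in> HH" using F.submoduleE(2)[OF h] by blast
  then have "\<zero> \<odot>\<^bsub>F\<^esub> a \<in> HH" using F.submoduleE(4)[OF h] by blast
  moreover have "a \<in> carrier F" using a F.submoduleE(1)[OF h] by blast
  ultimately show ?thesis by simp
qed

lemma inter_submodule:
  assumes ne: "SS \<noteq> {}" and sm: "\<And>HH. HH \<in> SS \<Longrightarrow> submodule HH R F"
  shows "submodule (\<Inter>SS) R F"
proof (rule F.submoduleI)
  obtain H0 where "H0 \<in> SS" using ne by blast
  then show "\<Inter> SS \<subseteq> carrier F" using F.submoduleE(1)[OF sm] by blast
  show "\<zero>\<^bsub>F\<^esub> \<in> \<Inter> SS" using sub_zero[OF sm] by blast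
  show "\<And>a. a \<in> \<Inter> SS \<Longrightarrow> \<ominus>\<^bsub>F\<^esub> a \<in> \<Inter> SS"
  proof -
    fix a assume "a \<in> \<Inter> SS" then show "\<ominus>\<^bsub>F\<^esub> a \<in> \<Inter> SS" using F.submoduleE(3)[OF sm] by blast
  qed
  show "\<And>a b. a \<in> \<Inter> SS \<Longrightarrow> b \<in> \<Inter> SS \<Longrightarrow> a \<oplus>\<^bsub>F\<^esub> b \<in> \<Inter> SS"
  proof -
    fix a b assume "a \<in> \<Inter> SS" "b \<in> \<Inter> SS" then show "a \<oplus>\<^bsub>F\<^esub> b \<in> \<Inter> SS" using F.submoduleE(5)[OF sm] by blast
  qed
  show "\<And>a x. a \<in> carrier R \<Longrightarrow> x \<in> \<Inter> SS \<Longrightarrow> a \<odot>\<^bsub>F\<^esub> x \<in> \<Inter> SS"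
  proof -
    fix a x assume "a \<in> carrier R" "x \<in> \<Inter> SS" then show "a \<odot>\<^bsub>F\<^esub> x \<in> \<Inter> SS" using F.submoduleE(4)[OF sm] by blast
  qed
qed

lemma K_submodule: "submodule K R F"
  unfolding tensor_kernel_def
  by (rule inter_submodule) (use F.carrier_is_submodule rels_car in auto)

lemma K_least: "submodule HH R F \<Longrightarrow> tensor_rels R M N \<subseteq> HH \<Longrightarrow> K \<subseteq> HH"
  unfolding tensor_kernel_def by blast

lemma rels_K: "tensor_rels R M N \<subseteq> K"
  unfolding tensor_kernel_def by blast

lemma K_car: "f \<in> K \<Longrightarrow> f \<in> carrier F"
  using F.submoduleE(1)[OF K_submodule] by blast

lemma K_zero: "(\<lambda>z. \<zero>) \<in> K"
  using sub_zero[OF K_submodule] F_zero by simp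

lemma K_add: "f \<in> K \<Longrightarrow> g \<in> K \<Longrightarrow> (\<lambda>z. f z \<oplus> g z) \<in> K"
  using F.submoduleE(5)[OF K_submodule, of f g] F_add[of f g] by simp

lemma K_smult: "r \<in> carrier R \<Longrightarrow> f \<in> K \<Longrightarrow> (\<lambda>z. r \<otimes> f z) \<in> K"
  using F.submoduleE(4)[OF K_submodule, of r f] F_smult[of r f] by simp

lemma K_neg: "f \<in> K \<Longrightarrow> (\<lambda>z. \<ominus> f z) \<in> K"
  using F.submoduleE(3)[OF K_submodule, of f] F_neg[OF K_car, of f] by simp

lemma K_sub: "f \<in> K \<Longrightarrow> g \<in> K \<Longrightarrow> (\<lambda>z. f z \<ominus> g z) \<in> K"
  using K_add[OF _ K_neg] by (simp add: a_minus_def)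

lemma K_eq: "f \<in> K \<Longrightarrow> (\<And>z. g z = f z) \<Longrightarrow> g \<in> K"
proof -
  assume "f \<in> K" "\<And>z. g z = f z"
  then have "g = f" by auto
  then show "g \<in> K" using \<open>f \<in> K\<close> by simp
qed

lemma K_self: "f \<in> carrier F \<Longrightarrow> (\<lambda>z. f z \<ominus> f z) \<in> K"
  by (rule K_eq[OF K_zero]) (simp add: a_minus_def R.r_neg Fcar)

lemma cls_self: "f \<in> carrier F \<Longrightarrow> f \<in> cls f"
  using K_self by (simp add: tensor_cls_def)

lemma cls_def': "cls f = {g \<in> carrier F. (\<lambda>z. g z \<ominus> f z) \<in> K}"
  by (simp add: tensor_cls_def)

lemma cls_eq_iff:
  assumes f: "f \<in> carrier F" and g: "g \<in> carrier F"
  shows "cls f = cls g \<longleftrightarrow> (\<lambda>z. f z \<ominus> g z) \<in> K"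
proof
  assume e: "cls f = cls g"
  have "f \<in> cls f" using f by (rule cls_self)
  then have "f \<in> cls g" using e by simp
  then show "(\<lambda>z. f z \<ominus> g z) \<in> K" by (simp add: cls_def')
next
  assume h: "(\<lambda>z. f z \<ominus> g z) \<in> K"
  show "cls f = cls g"
  proof (intro equalityI subsetI)
    fix x assume "x \<in> cls f"
    then have x: "x \<in> carrier F" "(\<lambda>z. x z \<ominus> f z) \<in> K" by (auto simp: cls_def')
    have "(\<lambda>z. x z \<ominus> g z) \<in> K"
      apply (rule K_eq[OF K_add[OF x(2) h]])
      by (rule R.H1) (use Fcar x f g in auto)
    then show "x \<in> cls g" using x by (simp add: cls_def')
  next
    fix x assume "x \<in> cls g"
    then have x: "x \<in> carrier F" "(\<lambda>z. x z \<ominus> g z) \<in> K" by (auto simp: cls_def')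
    have "(\<lambda>z. x z \<ominus> f z) \<in> K"
      apply (rule K_eq[OF K_sub[OF x(2) h]])
      by (rule R.H2) (use Fcar x f g in auto)
    then show "x \<in> cls f" using x by (simp add: cls_def')
  qed
qed

end

context tsetup
begin

lemma F_addc: "f \<in> carrier F \<Longrightarrow> g \<in> carrier F \<Longrightarrow> (\<lambda>z. f z \<oplus> g z) \<in> carrier F"
  using F.add.m_closed[of f g] F_add[of f g] by simp
lemma F_smultc: "r \<in> carrier R \<Longrightarrow> f \<in> carrier F \<Longrightarrow> (\<lambda>z. r \<otimes> f z) \<in> carrier F"
  using F.smult_closed[of r f] F_smult[of r f] by simp
lemma F_zeroc: "(\<lambda>z. \<zero>) \<in> carrier F"
  using F.zero_closed F_zero by simp
lemma F_negc: "f \<in> carrier F \<Longrightarrow> (\<lambda>z. \<ominus> f z) \<in> carrier F"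
  using F.add.inv_closed[of f] F_neg[of f] by simp

lemma T_car: "carrier T = cls ` carrier F"
  by (simp add: tensor_def)

lemma T_zero: "\<zero>\<^bsub>T\<^esub> = cls (\<lambda>z. \<zero>)"
  by (simp add: tensor_def)

lemma T_add:
  assumes f: "f \<in> carrier F" and g: "g \<in> carrier F"
  shows "cls f \<oplus>\<^bsub>T\<^esub> cls g = cls (\<lambda>z. f z \<oplus> g z)"
proof -
  have "cls f \<oplus>\<^bsub>T\<^esub> cls g = {h \<in> carrier F. \<exists>f'\<in>cls f. \<exists>g'\<in>cls g. (\<lambda>z. h z \<ominus> (f' z \<oplus> g' z)) \<in> K}"
    by (simp add: tensor_def)
  also have "\<dots> = cls (\<lambda>z. f z \<oplus> g z)"
  proof (intro equalityI subsetI)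
    fix h assume "h \<in> {h \<in> carrier F. \<exists>f'\<in>cls f. \<exists>g'\<in>cls g. (\<lambda>z. h z \<ominus> (f' z \<oplus> g' z)) \<in> K}"
    then obtain f' g' where h: "h \<in> carrier F" and f': "f' \<in> carrier F" "(\<lambda>z. f' z \<ominus> f z) \<in> K"
      and g': "g' \<in> carrier F" "(\<lambda>z. g' z \<ominus> g z) \<in> K" and k: "(\<lambda>z. h z \<ominus> (f' z \<oplus> g' z)) \<in> K"
      by (auto simp: cls_def')
    have "(\<lambda>z. h z \<ominus> (f z \<oplus> g z)) \<in> K"
      apply (rule K_eq[OF K_add[OF K_add[OF k f'(2)] g'(2)]])
      by (rule R.H3) (use Fcar h f g f' g' in auto)
    then show "h \<in> cls (\<lambda>z. f z \<oplus> g z)" using h by (simp add: cls_def')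
  next
    fix h assume "h \<in> cls (\<lambda>z. f z \<oplus> g z)"
    then show "h \<in> {h \<in> carrier F. \<exists>f'\<in>cls f. \<exists>g'\<in>cls g. (\<lambda>z. h z \<ominus> (f' z \<oplus> g' z)) \<in> K}"
      using cls_self[OF f] cls_self[OF g] by (auto simp: cls_def')
  qed
  finally show ?thesis .
qed

lemma T_smult:
  assumes r: "r \<in> carrier R" and f: "f \<in> carrier F"
  shows "r \<odot>\<^bsub>T\<^esub> cls f = cls (\<lambda>z. r \<otimes> f z)"
proof -
  have "r \<odot>\<^bsub>T\<^esub> cls f = {h \<in> carrier F. \<exists>f'\<in>cls f. (\<lambda>z. h z \<ominus> r \<otimes> f' z) \<in> K}"
    by (simp add: tensor_def)
  also have "\<dots> = cls (\<lambda>z. r \<otimes> f z)"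
  proof (intro equalityI subsetI)
    fix h assume "h \<in> {h \<in> carrier F. \<exists>f'\<in>cls f. (\<lambda>z. h z \<ominus> r \<otimes> f' z) \<in> K}"
    then obtain f' where h: "h \<in> carrier F" and f': "f' \<in> carrier F" "(\<lambda>z. f' z \<ominus> f z) \<in> K"
      and k: "(\<lambda>z. h z \<ominus> r \<otimes> f' z) \<in> K"
      by (auto simp: cls_def')
    have "(\<lambda>z. h z \<ominus> r \<otimes> f z) \<in> K"
      apply (rule K_eq[OF K_add[OF k K_smult[OF r f'(2)]]])
      by (rule R.H4) (use Fcar h f f' r in auto)
    then show "h \<in> cls (\<lambda>z. r \<otimes> f z)" using h by (simp add: cls_def')
  next
    fix h assume "h \<in> cls (\<lambda>z. r \<otimes> f z)"
    then show "h \<in> {h \<in> carrier F. \<exists>f'\<in>cls f. (\<lambda>z. h z \<ominus> r \<otimes> f' z) \<in> K}"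
      using cls_self[OF f] by (auto simp: cls_def')
  qed
  finally show ?thesis .
qed

lemma cls_cong: "f \<in> carrier F \<Longrightarrow> g \<in> carrier F \<Longrightarrow> (\<And>z. f z = g z) \<Longrightarrow> cls f = cls g"
proof -
  assume "\<And>z. f z = g z" then have "f = g" by auto
  then show "cls f = cls g" by simp
qed

lemma T_module: "module R T"
proof (rule moduleI[OF R.is_cring], rule abelian_groupI)
  fix x y assume "x \<in> carrier T" "y \<in> carrier T"
  then obtain f g where "f \<in> carrier F" "g \<in> carrier F" "x = cls f" "y = cls g" by (auto simp: T_car)
  then show "x \<oplus>\<^bsub>T\<^esub> y \<in> carrier T" by (simp add: T_add T_car F_addc)
next
  show "\<zero>\<^bsub>T\<^esub> \<in> carrier T" by (simp add: T_zero T_car F_zeroc)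
next
  fix x y z assume "x \<in> carrier T" "y \<in> carrier T" "z \<in> carrier T"
  then obtain f g h where fgh: "f \<in> carrier F" "g \<in> carrier F" "h \<in> carrier F" "x = cls f" "y = cls g" "z = cls h"
    by (auto simp: T_car)
  then show "x \<oplus>\<^bsub>T\<^esub> y \<oplus>\<^bsub>T\<^esub> z = x \<oplus>\<^bsub>T\<^esub> (y \<oplus>\<^bsub>T\<^esub> z)"
    by (simp add: T_add F_addc) (rule cls_cong, auto intro!: F_addc simp: R.a_assoc Fcar)
next
  fix x y assume "x \<in> carrier T" "y \<in> carrier T"
  then obtain f g where "f \<in> carrier F" "g \<in> carrier F" "x = cls f" "y = cls g" by (auto simp: T_car)
  then show "x \<oplus>\<^bsub>T\<^esub> y = y \<oplus>\<^bsub>T\<^esub> x"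
    by (simp add: T_add) (rule cls_cong, auto intro!: F_addc simp: R.a_comm Fcar)
next
  fix x assume "x \<in> carrier T"
  then obtain f where "f \<in> carrier F" "x = cls f" by (auto simp: T_car)
  then show "\<zero>\<^bsub>T\<^esub> \<oplus>\<^bsub>T\<^esub> x = x"
    by (simp add: T_add T_zero F_zeroc) (rule cls_cong, auto intro!: F_addc F_zeroc simp: Fcar)
next
  fix x assume "x \<in> carrier T"
  then obtain f where f: "f \<in> carrier F" "x = cls f" by (auto simp: T_car)
  show "\<exists>y\<in>carrier T. y \<oplus>\<^bsub>T\<^esub> x = \<zero>\<^bsub>T\<^esub>"
  proof (rule bexI[of _ "cls (\<lambda>z. \<ominus> f z)"])
    show "cls (\<lambda>z. \<ominus> f z) \<in> carrier T" using f by (simp add: T_car F_negc)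
    show "cls (\<lambda>z. \<ominus> f z) \<oplus>\<^bsub>T\<^esub> x = \<zero>\<^bsub>T\<^esub>"
      using f by (simp add: T_add T_zero F_negc) (rule cls_cong, auto intro!: F_addc F_negc F_zeroc simp: Fcar R.l_neg)
  qed
next
  fix a x assume "a \<in> carrier R" "x \<in> carrier T"
  then obtain f where "f \<in> carrier F" "x = cls f" by (auto simp: T_car)
  then show "a \<odot>\<^bsub>T\<^esub> x \<in> carrier T" using \<open>a \<in> carrier R\<close> by (simp add: T_smult T_car F_smultc)
next
  fix a b x assume ab: "a \<in> carrier R" "b \<in> carrier R" "x \<in> carrier T"
  then obtain f where "f \<in> carrier F" "x = cls f" by (auto simp: T_car)
  then show "(a \<oplus> b) \<odot>\<^bsub>T\<^esub> x = a \<odot>\<^bsub>T\<^esub> x \<oplus>\<^bsub>T\<^esub> b \<odot>\<^bsub>T\<^esub> x"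
    using ab by (simp add: T_smult T_add F_smultc) (rule cls_cong, auto intro!: F_addc F_smultc simp: Fcar R.l_distr)
next
  fix a x y assume a: "a \<in> carrier R" "x \<in> carrier T" "y \<in> carrier T"
  then obtain f g where "f \<in> carrier F" "g \<in> carrier F" "x = cls f" "y = cls g" by (auto simp: T_car)
  then show "a \<odot>\<^bsub>T\<^esub> (x \<oplus>\<^bsub>T\<^esub> y) = a \<odot>\<^bsub>T\<^esub> x \<oplus>\<^bsub>T\<^esub> a \<odot>\<^bsub>T\<^esub> y"
    using a by (simp add: T_smult T_add F_smultc F_addc) (rule cls_cong, auto intro!: F_addc F_smultc simp: Fcar R.r_distr)
next
  fix a b x assume ab: "a \<in> carrier R" "b \<in> carrier R" "x \<in> carrier T"
  then obtain f where "f \<in> carrier F" "x = cls f" by (auto simp: T_car)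
  then show "(a \<otimes> b) \<odot>\<^bsub>T\<^esub> x = a \<odot>\<^bsub>T\<^esub> (b \<odot>\<^bsub>T\<^esub> x)"
    using ab by (simp add: T_smult F_smultc) (rule cls_cong, auto intro!: F_smultc simp: Fcar R.m_assoc)
next
  fix x assume "x \<in> carrier T"
  then obtain f where "f \<in> carrier F" "x = cls f" by (auto simp: T_car)
  then show "\<one> \<odot>\<^bsub>T\<^esub> x = x" by (simp add: T_smult Fcar)
qed

end

lemma submodule_zero:
  fixes R :: "('a, 'b) ring_scheme" and XX :: "('a, 'c, 'd) module_scheme"
  assumes XX: "module R XX" and H: "submodule H R XX"
  shows "\<zero>\<^bsub>XX\<^esub> \<in> H"
proof -
  interpret XX: module R XX by fact
  obtain a where a: "a \<in> H" using XX.submoduleE(2)[OF H] by blast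
  then have "\<zero>\<^bsub>R\<^esub> \<odot>\<^bsub>XX\<^esub> a \<in> H" using XX.submoduleE(4)[OF H] by blast
  moreover have "a \<in> carrier XX" using a XX.submoduleE(1)[OF H] by blast
  ultimately show ?thesis by simp
qed

context tsetup
begin

interpretation T: module R T by (rule T_module)

lemma F_induct:
  assumes f: "f \<in> carrier F"
    and z: "Q (\<lambda>z. \<zero>)"
    and a: "\<And>f g. f \<in> carrier F \<Longrightarrow> g \<in> carrier F \<Longrightarrow> Q f \<Longrightarrow> Q g \<Longrightarrow> Q (\<lambda>z. f z \<oplus> g z)"
    and s: "\<And>r f. r \<in> carrier R \<Longrightarrow> f \<in> carrier F \<Longrightarrow> Q f \<Longrightarrow> Q (\<lambda>z. r \<otimes> f z)"
    and d: "\<And>m n. m \<in> carrier M \<Longrightarrow> n \<in> carrier N \<Longrightarrow> Q (delta R (m, n))"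
  shows "Q f"
  using f
proof (induction "card {x. f x \<noteq> \<zero>}" arbitrary: f rule: less_induct)
  case less
  show ?case
  proof (cases "{x. f x \<noteq> \<zero>} = {}")
    case True
    then have "f = (\<lambda>z. \<zero>)" by auto
    then show ?thesis using z by simp
  next
    case False
    then obtain w where w: "f w \<noteq> \<zero>" by auto
    obtain m n where mn: "w = (m, n)" by (cases w)
    have fw: "f w \<in> carrier R" using Fcar[OF less.prems] .
    have mnc: "m \<in> carrier M" "n \<in> carrier N"
      using w mn less.prems by (auto simp: free_mod_simps)
    have dc: "delta R (m, n) \<in> carrier F" using delta_car[OF mnc] .
    define g where "g = (\<lambda>z. f z \<ominus> f w \<otimes> delta R (m, n) z)"
    have gc: "g \<in> carrier F" unfolding g_def
      by (rule F_sub_car[OF less.prems F_smult_car[OF dc fw]])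
    have sub: "{x. g x \<noteq> \<zero>} \<subseteq> {x. f x \<noteq> \<zero>} - {w}"
    proof
      fix x assume "x \<in> {x. g x \<noteq> \<zero>}"
      then have gx: "g x \<noteq> \<zero>" by simp
      show "x \<in> {x. f x \<noteq> \<zero>} - {w}"
      proof (cases "x = w")
        case True
        then have "g x = \<zero>" using fw mn by (simp add: g_def delta_def R.r_neg a_minus_def)
        then show ?thesis using gx by simp
      next
        case False
        then have "g x = f x" using fw mn Fcar[OF less.prems, of x] by (simp add: g_def delta_def a_minus_def)
        then show ?thesis using gx False by simp
      qed
    qed
    have fin: "finite {x. f x \<noteq> \<zero>}" using less.prems by (simp add: free_mod_simps)
    have "card {x. g x \<noteq> \<zero>} < card {x. f x \<noteq> \<zero>}"
      by (rule psubset_card_mono[OF fin]) (use sub w in blast)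
    then have Qg: "Q g" using less.hyps gc by blast
    have Qd: "Q (\<lambda>z. f w \<otimes> delta R (m, n) z)" by (rule s[OF fw dc d[OF mnc]])
    have "Q (\<lambda>z. g z \<oplus> f w \<otimes> delta R (m, n) z)" by (rule a[OF gc F_smult_car[OF dc fw] Qg Qd])
    moreover have "(\<lambda>z. g z \<oplus> f w \<otimes> delta R (m, n) z) = f"
    proof
      fix z
      have "delta R (m, n) z \<in> carrier R" using Fcar[OF dc] .
      then show "g z \<oplus> f w \<otimes> delta R (m, n) z = f z"
        unfolding g_def by (intro R.H7 Fcar[OF less.prems] R.m_closed fw)
    qed
    ultimately show ?thesis by simp
  qed
qed

lemma T_induct:
  assumes x: "x \<in> carrier T"
    and z: "Q (cls (\<lambda>z. \<zero>))"
    and a: "\<And>f g. f \<in> carrier F \<Longrightarrow> g \<in> carrier F \<Longrightarrow> Q (cls f) \<Longrightarrow> Q (cls g) \<Longrightarrow> Q (cls (\<lambda>z. f z \<oplus> g z))"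
    and s: "\<And>r f. r \<in> carrier R \<Longrightarrow> f \<in> carrier F \<Longrightarrow> Q (cls f) \<Longrightarrow> Q (cls (\<lambda>z. r \<otimes> f z))"
    and d: "\<And>m n. m \<in> carrier M \<Longrightarrow> n \<in> carrier N \<Longrightarrow> Q (cls (delta R (m, n)))"
  shows "Q x"
proof -
  obtain f where f: "f \<in> carrier F" "x = cls f" using x by (auto simp: T_car)
  have "Q (cls f)" by (rule F_induct[OF f(1), where Q="\<lambda>f. Q (cls f)"]) (use z a s d in auto)
  then show ?thesis using f by simp
qed

abbreviation "et m n \<equiv> cls (delta R (m, n))"

lemma et_car: "m \<in> carrier M \<Longrightarrow> n \<in> carrier N \<Longrightarrow> et m n \<in> carrier T"
  using delta_car by (simp add: T_car)

lemma rel1: "m \<in> carrier M \<Longrightarrow> m' \<in> carrier M \<Longrightarrow> n \<in> carrier N \<Longrightarrow>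
   (\<lambda>z. delta R (m \<oplus>\<^bsub>M\<^esub> m', n) z \<ominus> delta R (m, n) z \<ominus> delta R (m', n) z) \<in> K"
  using rels_K unfolding tensor_rels_def by blast
lemma rel2: "m \<in> carrier M \<Longrightarrow> n \<in> carrier N \<Longrightarrow> n' \<in> carrier N \<Longrightarrow>
   (\<lambda>z. delta R (m, n \<oplus>\<^bsub>N\<^esub> n') z \<ominus> delta R (m, n) z \<ominus> delta R (m, n') z) \<in> K"
  using rels_K unfolding tensor_rels_def by blast
lemma rel3: "r \<in> carrier R \<Longrightarrow> m \<in> carrier M \<Longrightarrow> n \<in> carrier N \<Longrightarrow>
   (\<lambda>z. delta R (r \<odot>\<^bsub>M\<^esub> m, n) z \<ominus> r \<otimes> delta R (m, n) z) \<in> K"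
  using rels_K unfolding tensor_rels_def by blast
lemma rel4: "r \<in> carrier R \<Longrightarrow> m \<in> carrier M \<Longrightarrow> n \<in> carrier N \<Longrightarrow>
   (\<lambda>z. delta R (m, r \<odot>\<^bsub>N\<^esub> n) z \<ominus> r \<otimes> delta R (m, n) z) \<in> K"
  using rels_K unfolding tensor_rels_def by blast

lemma et_addl: assumes "m \<in> carrier M" "m' \<in> carrier M" "n \<in> carrier N"
  shows "et (m \<oplus>\<^bsub>M\<^esub> m') n = et m n \<oplus>\<^bsub>T\<^esub> et m' n"
proof -
  have c: "delta R (m \<oplus>\<^bsub>M\<^esub> m', n) \<in> carrier F" "delta R (m, n) \<in> carrier F" "delta R (m', n) \<in> carrier F"
    using assms by (auto intro!: delta_car)
  have "et (m \<oplus>\<^bsub>M\<^esub> m') n = cls (\<lambda>z. delta R (m, n) z \<oplus> delta R (m', n) z)"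
    apply (subst cls_eq_iff[OF c(1) F_addc[OF c(2,3)]])
    apply (rule K_eq[OF rel1[OF assms]])
    by (rule R.H5) (use c Fcar in auto)
  then show ?thesis using T_add[OF c(2,3)] by simp
qed

lemma et_addr: assumes "m \<in> carrier M" "n \<in> carrier N" "n' \<in> carrier N"
  shows "et m (n \<oplus>\<^bsub>N\<^esub> n') = et m n \<oplus>\<^bsub>T\<^esub> et m n'"
proof -
  have c: "delta R (m, n \<oplus>\<^bsub>N\<^esub> n') \<in> carrier F" "delta R (m, n) \<in> carrier F" "delta R (m, n') \<in> carrier F"
    using assms by (auto intro!: delta_car)
  have "et m (n \<oplus>\<^bsub>N\<^esub> n') = cls (\<lambda>z. delta R (m, n) z \<oplus> delta R (m, n') z)"
    apply (subst cls_eq_iff[OF c(1) F_addc[OF c(2,3)]])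
    apply (rule K_eq[OF rel2[OF assms]])
    by (rule R.H5) (use c Fcar in auto)
  then show ?thesis using T_add[OF c(2,3)] by simp
qed

lemma et_smultl: assumes "r \<in> carrier R" "m \<in> carrier M" "n \<in> carrier N"
  shows "et (r \<odot>\<^bsub>M\<^esub> m) n = r \<odot>\<^bsub>T\<^esub> et m n"
proof -
  have c: "delta R (r \<odot>\<^bsub>M\<^esub> m, n) \<in> carrier F" "delta R (m, n) \<in> carrier F"
    using assms by (auto intro!: delta_car)
  have "et (r \<odot>\<^bsub>M\<^esub> m) n = cls (\<lambda>z. r \<otimes> delta R (m, n) z)"
    by (subst cls_eq_iff[OF c(1) F_smult_car[OF c(2) assms(1)]]) (rule rel3[OF assms])
  then show ?thesis using T_smult[OF assms(1) c(2)] by simp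
qed

lemma et_smultr: assumes "r \<in> carrier R" "m \<in> carrier M" "n \<in> carrier N"
  shows "et m (r \<odot>\<^bsub>N\<^esub> n) = r \<odot>\<^bsub>T\<^esub> et m n"
proof -
  have c: "delta R (m, r \<odot>\<^bsub>N\<^esub> n) \<in> carrier F" "delta R (m, n) \<in> carrier F"
    using assms by (auto intro!: delta_car)
  have "et m (r \<odot>\<^bsub>N\<^esub> n) = cls (\<lambda>z. r \<otimes> delta R (m, n) z)"
    by (subst cls_eq_iff[OF c(1) F_smult_car[OF c(2) assms(1)]]) (rule rel4[OF assms])
  then show ?thesis using T_smult[OF assms(1) c(2)] by simp
qed

lemma delta_zero_K: "m \<in> carrier M \<Longrightarrow> delta R (m, \<zero>\<^bsub>N\<^esub>) \<in> K"
proof -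
  assume m: "m \<in> carrier M"
  have "(\<lambda>z. delta R (m, \<zero> \<odot>\<^bsub>N\<^esub> \<zero>\<^bsub>N\<^esub>) z \<ominus> \<zero> \<otimes> delta R (m, \<zero>\<^bsub>N\<^esub>) z) \<in> K"
    by (rule rel4) (use m in auto)
  then show ?thesis
    apply (rule K_eq)
    using Fcar[OF delta_car[OF m N.zero_closed]] by (simp add: a_minus_def)
qed

end

lemma prime_mult_notin:
  assumes "primeideal P R" "a \<in> carrier R" "b \<in> carrier R" "a \<notin> P" "b \<notin> P"
  shows "a \<otimes>\<^bsub>R\<^esub> b \<notin> P"
  using primeideal.I_prime[OF assms(1) assms(2,3)] assms(4,5) by blast

context tsetup
begin

interpretation T: module R T by (rule T_module)

lemma kill_span:
  assumes S: "finite S" "S \<subseteq> carrier N" and u: "u \<in> carrier R"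
    and k: "\<And>s. s \<in> S \<Longrightarrow> u \<odot>\<^bsub>N\<^esub> s = \<zero>\<^bsub>N\<^esub>" and a: "a \<in> S \<rightarrow> carrier R"
  shows "u \<odot>\<^bsub>N\<^esub> (\<Oplus>\<^bsub>N\<^esub> s \<in> S. a s \<odot>\<^bsub>N\<^esub> s) = \<zero>\<^bsub>N\<^esub>"
proof -
  have ac: "(\<lambda>s. a s \<odot>\<^bsub>N\<^esub> s) \<in> S \<rightarrow> carrier N" using a S by auto
  have "u \<odot>\<^bsub>N\<^esub> (\<Oplus>\<^bsub>N\<^esub> s \<in> S. a s \<odot>\<^bsub>N\<^esub> s) = (\<Oplus>\<^bsub>N\<^esub> s \<in> S. u \<odot>\<^bsub>N\<^esub> (a s \<odot>\<^bsub>N\<^esub> s))"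
    by (rule N.finsum_smult_ldistr[OF S(1) u ac])
  also have "\<dots> = (\<Oplus>\<^bsub>N\<^esub> s \<in> S. \<zero>\<^bsub>N\<^esub>)"
  proof (rule N.finsum_cong')
    fix s assume s: "s \<in> S"
    then have "u \<odot>\<^bsub>N\<^esub> (a s \<odot>\<^bsub>N\<^esub> s) = (u \<otimes> a s) \<odot>\<^bsub>N\<^esub> s"
      using a S u by (simp add: N.smult_assoc1 Pi_def subset_iff)
    also have "\<dots> = (a s \<otimes> u) \<odot>\<^bsub>N\<^esub> s" using a s u by (simp add: R.m_comm Pi_def)
    also have "\<dots> = a s \<odot>\<^bsub>N\<^esub> (u \<odot>\<^bsub>N\<^esub> s)"
      using a S u s by (simp add: N.smult_assoc1 Pi_def subset_iff)
    also have "\<dots> = \<zero>\<^bsub>N\<^esub>" using k[OF s] a s by (simp add: Pi_def)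
    finally show "u \<odot>\<^bsub>N\<^esub> (a s \<odot>\<^bsub>N\<^esub> s) = \<zero>\<^bsub>N\<^esub>" .
  qed simp_all
  also have "\<dots> = \<zero>\<^bsub>N\<^esub>" by (rule N.finsum_zero)
  finally show ?thesis .
qed

lemma killer_K:
  assumes u: "u \<in> carrier R" and k: "\<And>n. n \<in> carrier N \<Longrightarrow> u \<odot>\<^bsub>N\<^esub> n = \<zero>\<^bsub>N\<^esub>"
    and f: "f \<in> carrier F"
  shows "(\<lambda>z. u \<otimes> f z) \<in> K"
proof (rule F_induct[OF f, where Q="\<lambda>f. (\<lambda>z. u \<otimes> f z) \<in> K"])
  show "(\<lambda>z. u \<otimes> \<zero>) \<in> K" by (rule K_eq[OF K_zero]) (simp add: u)
next
  fix f g assume fg: "f \<in> carrier F" "g \<in> carrier F" "(\<lambda>z. u \<otimes> f z) \<in> K" "(\<lambda>z. u \<otimes> g z) \<in> K"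
  show "(\<lambda>z. u \<otimes> (f z \<oplus> g z)) \<in> K"
    by (rule K_eq[OF K_add[OF fg(3,4)]]) (simp add: u R.r_distr Fcar[OF fg(1)] Fcar[OF fg(2)])
next
  fix r f assume rf: "r \<in> carrier R" "f \<in> carrier F" "(\<lambda>z. u \<otimes> f z) \<in> K"
  show "(\<lambda>z. u \<otimes> (r \<otimes> f z)) \<in> K"
    by (rule K_eq[OF K_smult[OF rf(1) rf(3)]]) (simp add: u R.m_lcomm Fcar[OF rf(2)] rf(1))
next
  fix m n assume mn: "m \<in> carrier M" "n \<in> carrier N"
  have un: "u \<odot>\<^bsub>N\<^esub> n = \<zero>\<^bsub>N\<^esub>" using k[OF mn(2)] .
  have dz: "delta R (m, u \<odot>\<^bsub>N\<^esub> n) \<in> K" unfolding un by (rule delta_zero_K[OF mn(1)])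
  have c1: "delta R (m, u \<odot>\<^bsub>N\<^esub> n) \<in> carrier F" "delta R (m, n) \<in> carrier F"
    using mn u by (auto intro!: delta_car)
  show "(\<lambda>z. u \<otimes> delta R (m, n) z) \<in> K"
    by (rule K_eq[OF K_sub[OF dz rel4[OF u mn]]])
       (rule R.H6[symmetric], use Fcar c1 u in auto)
qed

lemma cls_K_zero: "f \<in> K \<Longrightarrow> cls f = \<zero>\<^bsub>T\<^esub>"
proof -
  assume f: "f \<in> K"
  have fc: "f \<in> carrier F" using K_car[OF f] .
  have "cls f = cls (\<lambda>z. \<zero>)"
    by (subst cls_eq_iff[OF fc F_zeroc]) (rule K_eq[OF f], simp add: a_minus_def Fcar[OF fc])
  then show ?thesis by (simp add: T_zero)
qed

lemma dir1_supp:
  assumes fg: "fin_gen_module R N" and P: "primeideal P R"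
    and U: "submodule U R T" and PU: "P = ann_quot R T U"
  shows "P \<in> Supp R N"
proof (rule ccontr)
  assume "P \<notin> Supp R N"
  then have H0: "\<not> (\<exists>x \<in> carrier N. \<forall>t \<in> carrier R - P. t \<odot>\<^bsub>N\<^esub> x \<noteq> \<zero>\<^bsub>N\<^esub>)"
    using P unfolding Supp_def by simp
  have H: "\<forall>x \<in> carrier N. \<exists>t \<in> carrier R - P. t \<odot>\<^bsub>N\<^esub> x = \<zero>\<^bsub>N\<^esub>"
  proof
    fix x assume "x \<in> carrier N"
    then have "\<not> (\<forall>t \<in> carrier R - P. t \<odot>\<^bsub>N\<^esub> x \<noteq> \<zero>\<^bsub>N\<^esub>)" using H0 by simp
    then show "\<exists>t \<in> carrier R - P. t \<odot>\<^bsub>N\<^esub> x = \<zero>\<^bsub>N\<^esub>" by simp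
  qed
  obtain S where S: "finite S" "S \<subseteq> carrier N"
    and sp: "\<forall>x \<in> carrier N. \<exists>a. a \<in> S \<rightarrow> carrier R \<and> x = (\<Oplus>\<^bsub>N\<^esub> s \<in> S. a s \<odot>\<^bsub>N\<^esub> s)"
    using fg unfolding fin_gen_module_def by blast
  have "\<exists>u \<in> carrier R - P. \<forall>s \<in> S'. u \<odot>\<^bsub>N\<^esub> s = \<zero>\<^bsub>N\<^esub>" if "S' \<subseteq> S" for S'
  proof -
    have "finite S'" using that S(1) finite_subset by blast
    then show ?thesis using that
    proof (induction S' rule: finite_induct)
      case empty
      have "\<one> \<notin> P"
      proof
        assume "\<one> \<in> P"
        then have "P = carrier R" using ideal.one_imp_carrier[OF primeideal.axioms(1)[OF P]] by blast
        then show False using primeideal.I_notcarr[OF P] by simp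
      qed
      then show ?case by auto
    next
      case (insert s S')
      then obtain u where u: "u \<in> carrier R - P" "\<forall>s \<in> S'. u \<odot>\<^bsub>N\<^esub> s = \<zero>\<^bsub>N\<^esub>" by auto
      have sN: "s \<in> carrier N" using insert S by auto
      obtain t where t: "t \<in> carrier R - P" "t \<odot>\<^bsub>N\<^esub> s = \<zero>\<^bsub>N\<^esub>" using H sN by blast
      have "t \<otimes> u \<in> carrier R - P" using prime_mult_notin[OF P] t u by auto
      moreover have "\<forall>x \<in> insert s S'. (t \<otimes> u) \<odot>\<^bsub>N\<^esub> x = \<zero>\<^bsub>N\<^esub>"
      proof
        fix x assume x: "x \<in> insert s S'"
        have xN: "x \<in> carrier N" using x insert S by auto
        show "(t \<otimes> u) \<odot>\<^bsub>N\<^esub> x = \<zero>\<^bsub>N\<^esub>"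
        proof (cases "x = s")
          case True
          have "(t \<otimes> u) \<odot>\<^bsub>N\<^esub> x = (u \<otimes> t) \<odot>\<^bsub>N\<^esub> x" using t u by (simp add: R.m_comm)
          also have "\<dots> = u \<odot>\<^bsub>N\<^esub> (t \<odot>\<^bsub>N\<^esub> x)" using t u xN by (simp add: N.smult_assoc1)
          finally show ?thesis using True t u by simp
        next
          case False
          then have "x \<in> S'" using x by simp
          then show ?thesis using t u xN by (simp add: N.smult_assoc1)
        qed
      qed
      ultimately show ?case by blast
    qed
  qed
  from this[OF subset_refl] obtain u where u: "u \<in> carrier R - P" "\<forall>s \<in> S. u \<odot>\<^bsub>N\<^esub> s = \<zero>\<^bsub>N\<^esub>" by (elim bexE) blast
  have kill: "u \<odot>\<^bsub>N\<^esub> n = \<zero>\<^bsub>N\<^esub>" if nN: "n \<in> carrier N" for n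
  proof -
    obtain a where a: "a \<in> S \<rightarrow> carrier R" "n = (\<Oplus>\<^bsub>N\<^esub> s \<in> S. a s \<odot>\<^bsub>N\<^esub> s)" using bspec[OF sp nN] by (elim exE conjE) blast
    show ?thesis unfolding a(2) by (rule kill_span[OF S]) (use u a in auto)
  qed
  have "u \<in> ann_quot R T U"
    unfolding ann_quot_def
  proof (intro CollectI conjI ballI)
    show "u \<in> carrier R" using u by simp
    fix x assume "x \<in> carrier T"
    then obtain f where f: "f \<in> carrier F" "x = cls f" by (auto simp: T_car)
    have "u \<odot>\<^bsub>T\<^esub> x = cls (\<lambda>z. u \<otimes> f z)" using T_smult f u by simp
    also have "\<dots> = \<zero>\<^bsub>T\<^esub>" by (rule cls_K_zero[OF killer_K[OF _ kill f(1)]]) (use u in auto)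
    finally show "u \<odot>\<^bsub>T\<^esub> x \<in> U" using submodule_zero[OF T_module U] by simp
  qed
  then show False using u PU by simp
qed

end

context tsetup
begin

interpretation T: module R T by (rule T_module)

lemma et_zero: "n \<in> carrier N \<Longrightarrow> et \<zero>\<^bsub>M\<^esub> n = \<zero>\<^bsub>T\<^esub>"
proof -
  assume n: "n \<in> carrier N"
  have "et (\<zero> \<odot>\<^bsub>M\<^esub> \<zero>\<^bsub>M\<^esub>) n = \<zero> \<odot>\<^bsub>T\<^esub> et \<zero>\<^bsub>M\<^esub> n"
    by (rule et_smultl) (use n in auto)
  then show ?thesis using et_car[OF M.zero_closed n] by simp
qed

lemma dir1_att:
  assumes P: "primeideal P R"
    and U: "submodule U R T" and PU: "P = ann_quot R T U"
  shows "P \<in> Att R M"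
proof -
  define U' where "U' = {m \<in> carrier M. \<forall>n \<in> carrier N. et m n \<in> U}"
  have Usub: "U \<subseteq> carrier T" using T.submoduleE(1)[OF U] .
  have U'sub: "submodule U' R M"
  proof (rule M.submoduleI)
    show "U' \<subseteq> carrier M" unfolding U'_def by blast
    show "\<zero>\<^bsub>M\<^esub> \<in> U'" unfolding U'_def using et_zero submodule_zero[OF T_module U] by simp
  next
    fix a assume a: "a \<in> U'"
    then have aM: "a \<in> carrier M" unfolding U'_def by blast
    have eq: "\<ominus>\<^bsub>M\<^esub> a = (\<ominus> \<one>) \<odot>\<^bsub>M\<^esub> a" using M.smult_l_minus[of \<one> a] aM by simp
    show "\<ominus>\<^bsub>M\<^esub> a \<in> U'" unfolding U'_def
    proof (intro CollectI conjI ballI)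
      show "\<ominus>\<^bsub>M\<^esub> a \<in> carrier M" using aM by simp
      fix n assume n: "n \<in> carrier N"
      have "et (\<ominus>\<^bsub>M\<^esub> a) n = (\<ominus> \<one>) \<odot>\<^bsub>T\<^esub> et a n" unfolding eq by (rule et_smultl) (use aM n in auto)
      moreover have "et a n \<in> U" using a n unfolding U'_def by blast
      ultimately show "et (\<ominus>\<^bsub>M\<^esub> a) n \<in> U" using T.submoduleE(4)[OF U] by simp
    qed
  next
    fix a b assume a: "a \<in> U'" and b: "b \<in> U'"
    then have aM: "a \<in> carrier M" and bM: "b \<in> carrier M" unfolding U'_def by blast+
    show "a \<oplus>\<^bsub>M\<^esub> b \<in> U'" unfolding U'_def
    proof (intro CollectI conjI ballI)
      show "a \<oplus>\<^bsub>M\<^esub> b \<in> carrier M" using aM bM by simp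
      fix n assume n: "n \<in> carrier N"
      have "et (a \<oplus>\<^bsub>M\<^esub> b) n = et a n \<oplus>\<^bsub>T\<^esub> et b n" by (rule et_addl[OF aM bM n])
      moreover have "et a n \<in> U" "et b n \<in> U" using a b n unfolding U'_def by blast+
      ultimately show "et (a \<oplus>\<^bsub>M\<^esub> b) n \<in> U" using T.submoduleE(5)[OF U] by simp
    qed
  next
    fix r a assume r: "r \<in> carrier R" and a: "a \<in> U'"
    then have aM: "a \<in> carrier M" unfolding U'_def by blast
    show "r \<odot>\<^bsub>M\<^esub> a \<in> U'" unfolding U'_def
    proof (intro CollectI conjI ballI)
      show "r \<odot>\<^bsub>M\<^esub> a \<in> carrier M" using aM r by simp
      fix n assume n: "n \<in> carrier N"
      have "et (r \<odot>\<^bsub>M\<^esub> a) n = r \<odot>\<^bsub>T\<^esub> et a n" by (rule et_smultl[OF r aM n])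
      moreover have "et a n \<in> U" using a n unfolding U'_def by blast
      ultimately show "et (r \<odot>\<^bsub>M\<^esub> a) n \<in> U" using T.submoduleE(4)[OF U] r by simp
    qed
  qed
  have "ann_quot R M U' = P"
  proof (intro equalityI subsetI)
    fix r assume r: "r \<in> ann_quot R M U'"
    then have rR: "r \<in> carrier R" and rm: "\<And>m. m \<in> carrier M \<Longrightarrow> r \<odot>\<^bsub>M\<^esub> m \<in> U'"
      unfolding ann_quot_def by blast+
    have "\<forall>x \<in> carrier T. r \<odot>\<^bsub>T\<^esub> x \<in> U"
    proof
      fix x assume x: "x \<in> carrier T"
      show "r \<odot>\<^bsub>T\<^esub> x \<in> U"
      proof (rule T_induct[OF x, where Q="\<lambda>C. r \<odot>\<^bsub>T\<^esub> C \<in> U"])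
        show "r \<odot>\<^bsub>T\<^esub> cls (\<lambda>z. \<zero>) \<in> U"
          using submodule_zero[OF T_module U] rR by (simp add: T_zero[symmetric])
      next
        fix f g assume fg: "f \<in> carrier F" "g \<in> carrier F" "r \<odot>\<^bsub>T\<^esub> cls f \<in> U" "r \<odot>\<^bsub>T\<^esub> cls g \<in> U"
        have c: "cls f \<in> carrier T" "cls g \<in> carrier T" using fg by (auto simp: T_car)
        have "r \<odot>\<^bsub>T\<^esub> cls (\<lambda>z. f z \<oplus> g z) = r \<odot>\<^bsub>T\<^esub> cls f \<oplus>\<^bsub>T\<^esub> r \<odot>\<^bsub>T\<^esub> cls g"
          using T_add[OF fg(1,2)] T.smult_r_distr[OF rR c] by simp
        then show "r \<odot>\<^bsub>T\<^esub> cls (\<lambda>z. f z \<oplus> g z) \<in> U" using T.submoduleE(5)[OF U fg(3,4)] by simp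
      next
        fix s f assume sf: "s \<in> carrier R" "f \<in> carrier F" "r \<odot>\<^bsub>T\<^esub> cls f \<in> U"
        have c: "cls f \<in> carrier T" using sf by (auto simp: T_car)
        have "r \<odot>\<^bsub>T\<^esub> cls (\<lambda>z. s \<otimes> f z) = r \<odot>\<^bsub>T\<^esub> (s \<odot>\<^bsub>T\<^esub> cls f)" using T_smult[OF sf(1,2)] by simp
        also have "\<dots> = (r \<otimes> s) \<odot>\<^bsub>T\<^esub> cls f" using T.smult_assoc1[OF rR sf(1) c] by simp
        also have "\<dots> = (s \<otimes> r) \<odot>\<^bsub>T\<^esub> cls f" using rR sf(1) by (simp add: R.m_comm)
        also have "\<dots> = s \<odot>\<^bsub>T\<^esub> (r \<odot>\<^bsub>T\<^esub> cls f)" using T.smult_assoc1[OF sf(1) rR c] by simp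
        finally show "r \<odot>\<^bsub>T\<^esub> cls (\<lambda>z. s \<otimes> f z) \<in> U" using T.submoduleE(4)[OF U sf(1) sf(3)] by simp
      next
        fix m n assume mn: "m \<in> carrier M" "n \<in> carrier N"
        have "r \<odot>\<^bsub>M\<^esub> m \<in> U'" using rm[OF mn(1)] .
        then have "et (r \<odot>\<^bsub>M\<^esub> m) n \<in> U" using mn(2) unfolding U'_def by blast
        then show "r \<odot>\<^bsub>T\<^esub> et m n \<in> U" using et_smultl[OF rR mn] by simp
      qed
    qed
    then show "r \<in> P" using rR PU unfolding ann_quot_def by blast
  next
    fix r assume "r \<in> P"
    then have rR: "r \<in> carrier R" and rT: "\<And>x. x \<in> carrier T \<Longrightarrow> r \<odot>\<^bsub>T\<^esub> x \<in> U"
      using PU unfolding ann_quot_def by blast+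
    have "\<forall>m \<in> carrier M. r \<odot>\<^bsub>M\<^esub> m \<in> U'"
    proof
      fix m assume m: "m \<in> carrier M"
      show "r \<odot>\<^bsub>M\<^esub> m \<in> U'" unfolding U'_def
      proof (intro CollectI conjI ballI)
        show "r \<odot>\<^bsub>M\<^esub> m \<in> carrier M" using m rR by simp
        fix n assume n: "n \<in> carrier N"
        show "et (r \<odot>\<^bsub>M\<^esub> m) n \<in> U" using et_smultl[OF rR m n] rT[OF et_car[OF m n]] by simp
      qed
    qed
    then show "r \<in> ann_quot R M U'" using rR unfolding ann_quot_def by blast
  qed
  then show ?thesis unfolding Att_def using P U'sub by blast
qed

end

context module
begin

definition nspan :: "_ set \<Rightarrow> _ set" where
  "nspan XS = \<Inter>{W. submodule W R M \<and> XS \<subseteq> W}"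

lemma inter_sub:
  assumes ne: "SS \<noteq> {}" and sm: "\<And>HH. HH \<in> SS \<Longrightarrow> submodule HH R M"
  shows "submodule (\<Inter>SS) R M"
proof (rule submoduleI)
  obtain H0 where "H0 \<in> SS" using ne by blast
  then show "\<Inter> SS \<subseteq> carrier M" using submoduleE(1)[OF sm] by blast
  show "\<zero>\<^bsub>M\<^esub> \<in> \<Inter> SS" using submodule_zero[OF module_axioms sm] by blast
  show "\<And>a. a \<in> \<Inter> SS \<Longrightarrow> \<ominus>\<^bsub>M\<^esub> a \<in> \<Inter> SS"
  proof -
    fix a assume "a \<in> \<Inter> SS" then show "\<ominus>\<^bsub>M\<^esub> a \<in> \<Inter> SS" using submoduleE(3)[OF sm] by blast
  qed
  show "\<And>a b. a \<in> \<Inter> SS \<Longrightarrow> b \<in> \<Inter> SS \<Longrightarrow> a \<oplus>\<^bsub>M\<^esub> b \<in> \<Inter> SS"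
  proof -
    fix a b assume "a \<in> \<Inter> SS" "b \<in> \<Inter> SS" then show "a \<oplus>\<^bsub>M\<^esub> b \<in> \<Inter> SS" using submoduleE(5)[OF sm] by blast
  qed
  show "\<And>a x. a \<in> carrier R \<Longrightarrow> x \<in> \<Inter> SS \<Longrightarrow> a \<odot>\<^bsub>M\<^esub> x \<in> \<Inter> SS"
  proof -
    fix a x assume "a \<in> carrier R" "x \<in> \<Inter> SS" then show "a \<odot>\<^bsub>M\<^esub> x \<in> \<Inter> SS" using submoduleE(4)[OF sm] by blast
  qed
qed

lemma nspan_sub: "XS \<subseteq> carrier M \<Longrightarrow> submodule (nspan XS) R M"
  unfolding nspan_def by (rule inter_sub) (use carrier_is_submodule in auto)

lemma nspan_incl: "XS \<subseteq> nspan XS"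
  unfolding nspan_def by blast

lemma nspan_least: "submodule W R M \<Longrightarrow> XS \<subseteq> W \<Longrightarrow> nspan XS \<subseteq> W"
  unfolding nspan_def by blast

lemma nspan_mono: "XS \<subseteq> YS \<Longrightarrow> YS \<subseteq> carrier M \<Longrightarrow> nspan XS \<subseteq> nspan YS"
  by (rule nspan_least[OF nspan_sub]) (use nspan_incl in blast)+

lemma nspan_of_sub: "submodule W R M \<Longrightarrow> nspan W = W"
  using nspan_least[of W W] nspan_incl[of W] by blast

lemma nspan_car: "XS \<subseteq> carrier M \<Longrightarrow> nspan XS \<subseteq> carrier M"
  using submoduleE(1)[OF nspan_sub] by blast

lemma sub_minus: "submodule W R M \<Longrightarrow> a \<in> W \<Longrightarrow> b \<in> W \<Longrightarrow> a \<ominus>\<^bsub>M\<^esub> b \<in> W"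
  unfolding a_minus_def using submoduleE(3,5) by blast

lemma preimage_sub:
  assumes W: "submodule W R M" and a: "a \<in> carrier R"
  shows "submodule {z \<in> carrier M. a \<odot>\<^bsub>M\<^esub> z \<in> W} R M"
proof (rule submoduleI)
  show "{z \<in> carrier M. a \<odot>\<^bsub>M\<^esub> z \<in> W} \<subseteq> carrier M" by blast
  show "\<zero>\<^bsub>M\<^esub> \<in> {z \<in> carrier M. a \<odot>\<^bsub>M\<^esub> z \<in> W}" using a submodule_zero[OF module_axioms W] by simp
next
  fix x assume "x \<in> {z \<in> carrier M. a \<odot>\<^bsub>M\<^esub> z \<in> W}"
  then have x: "x \<in> carrier M" "a \<odot>\<^bsub>M\<^esub> x \<in> W" by auto
  have "a \<odot>\<^bsub>M\<^esub> (\<ominus>\<^bsub>M\<^esub> x) = \<ominus>\<^bsub>M\<^esub> (a \<odot>\<^bsub>M\<^esub> x)" using smult_r_minus a x by simp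
  then show "\<ominus>\<^bsub>M\<^esub> x \<in> {z \<in> carrier M. a \<odot>\<^bsub>M\<^esub> z \<in> W}" using submoduleE(3)[OF W x(2)] x by simp
next
  fix x y assume "x \<in> {z \<in> carrier M. a \<odot>\<^bsub>M\<^esub> z \<in> W}" "y \<in> {z \<in> carrier M. a \<odot>\<^bsub>M\<^esub> z \<in> W}"
  then have x: "x \<in> carrier M" "a \<odot>\<^bsub>M\<^esub> x \<in> W" and y: "y \<in> carrier M" "a \<odot>\<^bsub>M\<^esub> y \<in> W" by auto
  show "x \<oplus>\<^bsub>M\<^esub> y \<in> {z \<in> carrier M. a \<odot>\<^bsub>M\<^esub> z \<in> W}"
    using submoduleE(5)[OF W x(2) y(2)] smult_r_distr[OF a x(1) y(1)] x y by simp
next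
  fix b x assume b: "b \<in> carrier R" and "x \<in> {z \<in> carrier M. a \<odot>\<^bsub>M\<^esub> z \<in> W}"
  then have x: "x \<in> carrier M" "a \<odot>\<^bsub>M\<^esub> x \<in> W" by auto
  have "a \<odot>\<^bsub>M\<^esub> (b \<odot>\<^bsub>M\<^esub> x) = b \<odot>\<^bsub>M\<^esub> (a \<odot>\<^bsub>M\<^esub> x)"
    using a b x by (simp add: smult_assoc1[symmetric] m_comm)
  then show "b \<odot>\<^bsub>M\<^esub> x \<in> {z \<in> carrier M. a \<odot>\<^bsub>M\<^esub> z \<in> W}" using submoduleE(4)[OF W b x(2)] x b by simp
qed

lemma span_insert:
  assumes I: "ideal I R" and g: "g \<in> carrier M" and XS: "XS \<subseteq> carrier M"
  shows "nspan (XS \<union> {r \<odot>\<^bsub>M\<^esub> g | r. r \<in> I}) = {y \<oplus>\<^bsub>M\<^esub> r \<odot>\<^bsub>M\<^esub> g | y r. y \<in> nspan XS \<and> r \<in> I}"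
    (is "nspan ?A = ?B")
proof -
  have Isub: "I \<subseteq> carrier R" using additive_subgroup.a_subset[OF ideal.axioms(1)[OF I]] .
  have I0: "\<zero> \<in> I" using additive_subgroup.zero_closed[OF ideal.axioms(1)[OF I]] .
  have Ineg: "\<And>r. r \<in> I \<Longrightarrow> \<ominus> r \<in> I" using additive_subgroup.a_inv_closed[OF ideal.axioms(1)[OF I]] .
  have Iadd: "\<And>r s. r \<in> I \<Longrightarrow> s \<in> I \<Longrightarrow> r \<oplus> s \<in> I" using additive_subgroup.a_closed[OF ideal.axioms(1)[OF I]] .
  have Imul: "\<And>r a. r \<in> I \<Longrightarrow> a \<in> carrier R \<Longrightarrow> a \<otimes> r \<in> I" using ideal.I_l_closed[OF I] .
  have SX: "submodule (nspan XS) R M" by (rule nspan_sub[OF XS])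
  have SXc: "nspan XS \<subseteq> carrier M" by (rule nspan_car[OF XS])
  have Ac: "?A \<subseteq> carrier M" using XS g Isub by auto
  have Bsub: "submodule ?B R M"
  proof (rule submoduleI)
    show "?B \<subseteq> carrier M" using SXc g Isub by auto
    have "\<zero>\<^bsub>M\<^esub> = \<zero>\<^bsub>M\<^esub> \<oplus>\<^bsub>M\<^esub> \<zero> \<odot>\<^bsub>M\<^esub> g" using g by simp
    then show "\<zero>\<^bsub>M\<^esub> \<in> ?B" using submodule_zero[OF module_axioms SX] I0 by blast
  next
    fix a assume "a \<in> ?B"
    then obtain y r where yr: "y \<in> nspan XS" "r \<in> I" "a = y \<oplus>\<^bsub>M\<^esub> r \<odot>\<^bsub>M\<^esub> g" by blast
    have yc: "y \<in> carrier M" using yr SXc by blast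
    have rc: "r \<in> carrier R" using yr Isub by blast
    have "\<ominus>\<^bsub>M\<^esub> a = \<ominus>\<^bsub>M\<^esub> y \<oplus>\<^bsub>M\<^esub> (\<ominus> r) \<odot>\<^bsub>M\<^esub> g"
      using yr(3) yc rc g by (simp add: M.minus_add smult_l_minus)
    moreover have "\<ominus>\<^bsub>M\<^esub> y \<in> nspan XS" using submoduleE(3)[OF SX yr(1)] .
    ultimately show "\<ominus>\<^bsub>M\<^esub> a \<in> ?B" using Ineg[OF yr(2)] by blast
  next
    fix a b assume "a \<in> ?B" "b \<in> ?B"
    then obtain y r y' r' where yr: "y \<in> nspan XS" "r \<in> I" "a = y \<oplus>\<^bsub>M\<^esub> r \<odot>\<^bsub>M\<^esub> g"
      and yr': "y' \<in> nspan XS" "r' \<in> I" "b = y' \<oplus>\<^bsub>M\<^esub> r' \<odot>\<^bsub>M\<^esub> g" by blast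
    have c: "y \<in> carrier M" "y' \<in> carrier M" "r \<in> carrier R" "r' \<in> carrier R"
      using yr yr' SXc Isub by blast+
    have "a \<oplus>\<^bsub>M\<^esub> b = (y \<oplus>\<^bsub>M\<^esub> y') \<oplus>\<^bsub>M\<^esub> (r \<oplus> r') \<odot>\<^bsub>M\<^esub> g"
      using yr(3) yr'(3) c g by (simp add: smult_l_distr M.a_ac)
    moreover have "y \<oplus>\<^bsub>M\<^esub> y' \<in> nspan XS" using submoduleE(5)[OF SX yr(1) yr'(1)] .
    ultimately show "a \<oplus>\<^bsub>M\<^esub> b \<in> ?B" using Iadd[OF yr(2) yr'(2)] by blast
  next
    fix s a assume s: "s \<in> carrier R" and "a \<in> ?B"
    then obtain y r where yr: "y \<in> nspan XS" "r \<in> I" "a = y \<oplus>\<^bsub>M\<^esub> r \<odot>\<^bsub>M\<^esub> g" by blast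
    have c: "y \<in> carrier M" "r \<in> carrier R" using yr SXc Isub by blast+
    have "s \<odot>\<^bsub>M\<^esub> a = s \<odot>\<^bsub>M\<^esub> y \<oplus>\<^bsub>M\<^esub> (s \<otimes> r) \<odot>\<^bsub>M\<^esub> g"
      using yr(3) c g s by (simp add: smult_r_distr smult_assoc1)
    moreover have "s \<odot>\<^bsub>M\<^esub> y \<in> nspan XS" using submoduleE(4)[OF SX s yr(1)] .
    ultimately show "s \<odot>\<^bsub>M\<^esub> a \<in> ?B" using Imul[OF yr(2) s] by blast
  qed
  have AB: "?A \<subseteq> ?B"
  proof
    fix x assume "x \<in> ?A"
    then consider "x \<in> XS" | r where "r \<in> I" "x = r \<odot>\<^bsub>M\<^esub> g" by blast
    then show "x \<in> ?B"
    proof cases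
      case 1
      then have "x = x \<oplus>\<^bsub>M\<^esub> \<zero> \<odot>\<^bsub>M\<^esub> g" using XS g by auto
      moreover have "x \<in> nspan XS" using 1 nspan_incl by blast
      ultimately show ?thesis using I0 by blast
    next
      case 2
      then have "x = \<zero>\<^bsub>M\<^esub> \<oplus>\<^bsub>M\<^esub> r \<odot>\<^bsub>M\<^esub> g" using Isub g by auto
      then show ?thesis using 2 submodule_zero[OF module_axioms SX] by blast
    qed
  qed
  have BA: "?B \<subseteq> nspan ?A"
  proof
    fix x assume "x \<in> ?B"
    then obtain y r where yr: "y \<in> nspan XS" "r \<in> I" "x = y \<oplus>\<^bsub>M\<^esub> r \<odot>\<^bsub>M\<^esub> g" by blast
    have "y \<in> nspan ?A" using yr(1) nspan_mono[of XS ?A] Ac by blast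
    moreover have "r \<odot>\<^bsub>M\<^esub> g \<in> nspan ?A" using yr(2) nspan_incl[of ?A] by blast
    ultimately show "x \<in> nspan ?A" using submoduleE(5)[OF nspan_sub[OF Ac]] yr(3) by blast
  qed
  show ?thesis using nspan_least[OF Bsub AB] BA by blast
qed

end

context module
begin

definition PSet :: "'a set \<Rightarrow> _ set \<Rightarrow> _ set" where
  "PSet P S = {p \<odot>\<^bsub>M\<^esub> s | p s. p \<in> P \<and> s \<in> S}"

lemma PSet_car: "primeideal P R \<Longrightarrow> S \<subseteq> carrier M \<Longrightarrow> PSet P S \<subseteq> carrier M"
  unfolding PSet_def using additive_subgroup.a_subset[OF ideal.axioms(1)[OF primeideal.axioms(1)]] by blast

lemma one_notin_prime: "primeideal P R \<Longrightarrow> \<one> \<notin> P"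
proof
  assume P: "primeideal P R" and "\<one> \<in> P"
  then have "P = carrier R" using ideal.one_imp_carrier[OF primeideal.axioms(1)[OF P]] by blast
  then show False using primeideal.I_notcarr[OF P] by simp
qed

lemma nakayama:
  assumes P: "primeideal P R" and S: "finite S" "S \<subseteq> carrier M"
  shows "\<forall>W u. submodule W R M \<longrightarrow> u \<in> carrier R - P \<longrightarrow> (\<forall>g\<in>S. u \<odot>\<^bsub>M\<^esub> g \<in> nspan (PSet P S \<union> W))
           \<longrightarrow> (\<exists>v \<in> carrier R - P. \<forall>g\<in>S. v \<odot>\<^bsub>M\<^esub> g \<in> W)"
  using S
proof (induction S rule: finite_induct)
  case empty
  show ?case using one_notin_prime[OF P] by auto
next
  case (insert g S')
  have Pid: "ideal P R" using primeideal.axioms(1)[OF P] .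
  have Psub: "P \<subseteq> carrier R" using additive_subgroup.a_subset[OF ideal.axioms(1)[OF Pid]] .
  have Pneg: "\<And>r. r \<in> P \<Longrightarrow> \<ominus> r \<in> P" using additive_subgroup.a_inv_closed[OF ideal.axioms(1)[OF Pid]] .
  have Padd: "\<And>r s. r \<in> P \<Longrightarrow> s \<in> P \<Longrightarrow> r \<oplus> s \<in> P" using additive_subgroup.a_closed[OF ideal.axioms(1)[OF Pid]] .
  have Pmul: "\<And>r a. r \<in> P \<Longrightarrow> a \<in> carrier R \<Longrightarrow> r \<otimes> a \<in> P" using ideal.I_r_closed[OF Pid] .
  have gc: "g \<in> carrier M" and S'c: "S' \<subseteq> carrier M" using insert.prems by auto
  have IH: "\<And>W u. submodule W R M \<Longrightarrow> u \<in> carrier R - P \<Longrightarrow> (\<forall>g\<in>S'. u \<odot>\<^bsub>M\<^esub> g \<in> nspan (PSet P S' \<union> W))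
           \<Longrightarrow> (\<exists>v \<in> carrier R - P. \<forall>g\<in>S'. v \<odot>\<^bsub>M\<^esub> g \<in> W)"
    using insert.IH[OF S'c] by blast
  show ?case
  proof (intro allI impI)
    fix W u assume W: "submodule W R M" and u: "u \<in> carrier R - P"
      and hyp: "\<forall>h\<in>insert g S'. u \<odot>\<^bsub>M\<^esub> h \<in> nspan (PSet P (insert g S') \<union> W)"
    have Wc: "W \<subseteq> carrier M" using submoduleE(1)[OF W] .
    have uc: "u \<in> carrier R" using u by simp
    define Pg where "Pg = {r \<odot>\<^bsub>M\<^esub> g | r. r \<in> P}"
    define Rg where "Rg = {r \<odot>\<^bsub>M\<^esub> g | r. r \<in> carrier R}"
    define X0 where "X0 = PSet P S' \<union> W"
    have X0c: "X0 \<subseteq> carrier M" unfolding X0_def using PSet_car[OF P S'c] Wc by blast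
    have PSins: "PSet P (insert g S') \<union> W = X0 \<union> Pg" unfolding PSet_def X0_def Pg_def by blast
    have char1: "nspan (X0 \<union> Pg) = {y \<oplus>\<^bsub>M\<^esub> r \<odot>\<^bsub>M\<^esub> g | y r. y \<in> nspan X0 \<and> r \<in> P}"
      unfolding Pg_def by (rule span_insert[OF Pid gc X0c])
    define W' where "W' = {w \<oplus>\<^bsub>M\<^esub> r \<odot>\<^bsub>M\<^esub> g | w r. w \<in> W \<and> r \<in> carrier R}"
    have W'eq: "nspan (W \<union> Rg) = W'"
      unfolding Rg_def W'_def using span_insert[OF oneideal gc Wc] nspan_of_sub[OF W] by simp
    have W'sub: "submodule W' R M" using nspan_sub[of "W \<union> Rg"] W'eq Wc gc unfolding Rg_def by auto
    have W'c: "W' \<subseteq> carrier M" using submoduleE(1)[OF W'sub] .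
    define B where "B = {w \<oplus>\<^bsub>M\<^esub> r \<odot>\<^bsub>M\<^esub> g | w r. w \<in> W \<and> r \<in> P}"
    have Beq: "nspan (W \<union> Pg) = B"
      unfolding Pg_def B_def using span_insert[OF Pid gc Wc] nspan_of_sub[OF W] by simp
    have Bsub: "submodule B R M" using nspan_sub[of "W \<union> Pg"] Beq Wc gc Psub unfolding Pg_def by auto
    have "u \<odot>\<^bsub>M\<^esub> g \<in> nspan (X0 \<union> Pg)" using hyp PSins by auto
    then obtain y p where yp: "y \<in> nspan X0" "p \<in> P" "u \<odot>\<^bsub>M\<^esub> g = y \<oplus>\<^bsub>M\<^esub> p \<odot>\<^bsub>M\<^esub> g"
      using char1 by blast
    have yc: "y \<in> carrier M" using yp(1) nspan_car[OF X0c] by blast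
    have pc: "p \<in> carrier R" using yp(2) Psub by blast
    define v where "v = u \<ominus> p"
    have vc: "v \<in> carrier R" unfolding v_def using uc pc by simp
    have vP: "v \<notin> P"
    proof
      assume "v \<in> P"
      then have "v \<oplus> p \<in> P" using Padd yp(2) by blast
      moreover have "v \<oplus> p = u" unfolding v_def using uc pc by (simp add: a_minus_def R.a_assoc R.l_neg)
      ultimately show False using u by simp
    qed
    have vg: "v \<odot>\<^bsub>M\<^esub> g = y"
    proof -
      have "v \<odot>\<^bsub>M\<^esub> g = u \<odot>\<^bsub>M\<^esub> g \<oplus>\<^bsub>M\<^esub> \<ominus>\<^bsub>M\<^esub> (p \<odot>\<^bsub>M\<^esub> g)"
        unfolding v_def a_minus_def using uc pc gc by (simp add: smult_l_distr smult_l_minus)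
      also have "\<dots> = y" using yp(3) yc pc gc by (simp add: M.a_assoc M.r_neg)
      finally show ?thesis .
    qed
    have "\<forall>h\<in>S'. u \<odot>\<^bsub>M\<^esub> h \<in> nspan (PSet P S' \<union> W')"
    proof
      fix h assume h: "h \<in> S'"
      have "u \<odot>\<^bsub>M\<^esub> h \<in> nspan (X0 \<union> Pg)" using hyp PSins h by auto
      moreover have "X0 \<union> Pg \<subseteq> PSet P S' \<union> W'"
      proof -
        have "W \<subseteq> W'" using W'eq nspan_incl[of "W \<union> Rg"] by blast
        moreover have "Pg \<subseteq> W'" using W'eq nspan_incl[of "W \<union> Rg"] Psub unfolding Pg_def Rg_def by blast
        ultimately show ?thesis unfolding X0_def by blast
      qed
      moreover have "PSet P S' \<union> W' \<subseteq> carrier M" using PSet_car[OF P S'c] W'c by blast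
      ultimately show "u \<odot>\<^bsub>M\<^esub> h \<in> nspan (PSet P S' \<union> W')" using nspan_mono by blast
    qed
    then obtain u' where u': "u' \<in> carrier R - P" "\<forall>h\<in>S'. u' \<odot>\<^bsub>M\<^esub> h \<in> W'"
      using IH[OF W'sub u] by blast
    have u'c: "u' \<in> carrier R" using u' by simp
    define Z where "Z = {z \<in> carrier M. u' \<odot>\<^bsub>M\<^esub> z \<in> B}"
    have Zsub: "submodule Z R M" unfolding Z_def by (rule preimage_sub[OF Bsub u'c])
    have X0Z: "X0 \<subseteq> Z"
    proof
      fix x assume x: "x \<in> X0"
      then consider "x \<in> W" | q h where "q \<in> P" "h \<in> S'" "x = q \<odot>\<^bsub>M\<^esub> h"
        unfolding X0_def PSet_def by blast
      then show "x \<in> Z"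
      proof cases
        case 1
        have "u' \<odot>\<^bsub>M\<^esub> x \<in> W" using submoduleE(4)[OF W u'c 1] .
        moreover have "W \<subseteq> B" using Beq nspan_incl[of "W \<union> Pg"] by blast
        ultimately show ?thesis unfolding Z_def using 1 Wc by blast
      next
        case 2
        have qc: "q \<in> carrier R" using 2 Psub by blast
        have hc: "h \<in> carrier M" using 2 S'c by blast
        obtain w r where wr: "w \<in> W" "r \<in> carrier R" "u' \<odot>\<^bsub>M\<^esub> h = w \<oplus>\<^bsub>M\<^esub> r \<odot>\<^bsub>M\<^esub> g"
          using u'(2) 2(2) unfolding W'_def by blast
        have wc: "w \<in> carrier M" using wr Wc by blast
        have "u' \<odot>\<^bsub>M\<^esub> x = q \<odot>\<^bsub>M\<^esub> (u' \<odot>\<^bsub>M\<^esub> h)"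
          using 2(3) qc u'c hc by (simp add: smult_assoc1[symmetric] m_comm)
        also have "\<dots> = q \<odot>\<^bsub>M\<^esub> w \<oplus>\<^bsub>M\<^esub> (q \<otimes> r) \<odot>\<^bsub>M\<^esub> g"
          using wr(3) qc wc wr(2) gc by (simp add: smult_r_distr smult_assoc1)
        finally have "u' \<odot>\<^bsub>M\<^esub> x = q \<odot>\<^bsub>M\<^esub> w \<oplus>\<^bsub>M\<^esub> (q \<otimes> r) \<odot>\<^bsub>M\<^esub> g" .
        moreover have "q \<odot>\<^bsub>M\<^esub> w \<in> W" using submoduleE(4)[OF W qc wr(1)] .
        moreover have "q \<otimes> r \<in> P" using Pmul[OF 2(1) wr(2)] .
        ultimately have "u' \<odot>\<^bsub>M\<^esub> x \<in> B" unfolding B_def by blast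
        moreover have "x \<in> carrier M" using 2(3) qc hc by simp
        ultimately show ?thesis unfolding Z_def by blast
      qed
    qed
    have "nspan X0 \<subseteq> Z" by (rule nspan_least[OF Zsub X0Z])
    then have "u' \<odot>\<^bsub>M\<^esub> y \<in> B" using yp(1) unfolding Z_def by blast
    then obtain w q where wq: "w \<in> W" "q \<in> P" "u' \<odot>\<^bsub>M\<^esub> y = w \<oplus>\<^bsub>M\<^esub> q \<odot>\<^bsub>M\<^esub> g" unfolding B_def by blast
    have wc: "w \<in> carrier M" using wq Wc by blast
    have qc: "q \<in> carrier R" using wq Psub by blast
    define e where "e = u' \<otimes> v \<ominus> q"
    have ec: "e \<in> carrier R" unfolding e_def using u'c vc qc by simp
    have eP: "e \<notin> P"
    proof
      assume "e \<in> P"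
      then have "e \<oplus> q \<in> P" using Padd wq(2) by blast
      moreover have "e \<oplus> q = u' \<otimes> v" unfolding e_def using u'c vc qc by (simp add: a_minus_def R.a_assoc R.l_neg)
      ultimately have "u' \<otimes> v \<in> P" by simp
      then show False using primeideal.I_prime[OF P u'c vc] u' vP by blast
    qed
    have eg: "e \<odot>\<^bsub>M\<^esub> g = w"
    proof -
      have "e \<odot>\<^bsub>M\<^esub> g = (u' \<otimes> v) \<odot>\<^bsub>M\<^esub> g \<oplus>\<^bsub>M\<^esub> \<ominus>\<^bsub>M\<^esub> (q \<odot>\<^bsub>M\<^esub> g)"
        unfolding e_def a_minus_def using u'c vc qc gc by (simp add: smult_l_distr smult_l_minus)
      also have "(u' \<otimes> v) \<odot>\<^bsub>M\<^esub> g = w \<oplus>\<^bsub>M\<^esub> q \<odot>\<^bsub>M\<^esub> g"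
        using smult_assoc1[OF u'c vc gc] vg wq(3) by simp
      finally show ?thesis using wc qc gc by (simp add: M.a_assoc M.r_neg)
    qed
    show "\<exists>v\<in>carrier R - P. \<forall>h\<in>insert g S'. v \<odot>\<^bsub>M\<^esub> h \<in> W"
    proof (intro bexI ballI)
      show "e \<otimes> u' \<in> carrier R - P" using primeideal.I_prime[OF P ec u'c] eP u' ec u'c by auto
      fix h assume h: "h \<in> insert g S'"
      show "(e \<otimes> u') \<odot>\<^bsub>M\<^esub> h \<in> W"
      proof (cases "h = g")
        case True
        have "(e \<otimes> u') \<odot>\<^bsub>M\<^esub> h = u' \<odot>\<^bsub>M\<^esub> (e \<odot>\<^bsub>M\<^esub> g)"
          using True ec u'c gc by (simp add: smult_assoc1[symmetric] m_comm)
        then show ?thesis using eg submoduleE(4)[OF W u'c wq(1)] by simp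
      next
        case False
        then have hS: "h \<in> S'" using h by simp
        have hc: "h \<in> carrier M" using hS S'c by blast
        obtain w2 r where wr: "w2 \<in> W" "r \<in> carrier R" "u' \<odot>\<^bsub>M\<^esub> h = w2 \<oplus>\<^bsub>M\<^esub> r \<odot>\<^bsub>M\<^esub> g"
          using u'(2) hS unfolding W'_def by blast
        have w2c: "w2 \<in> carrier M" using wr Wc by blast
        have "(e \<otimes> u') \<odot>\<^bsub>M\<^esub> h = e \<odot>\<^bsub>M\<^esub> w2 \<oplus>\<^bsub>M\<^esub> r \<odot>\<^bsub>M\<^esub> (e \<odot>\<^bsub>M\<^esub> g)"
        proof -
          have "(e \<otimes> u') \<odot>\<^bsub>M\<^esub> h = e \<odot>\<^bsub>M\<^esub> (w2 \<oplus>\<^bsub>M\<^esub> r \<odot>\<^bsub>M\<^esub> g)"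
            using wr(3) ec u'c hc by (simp add: smult_assoc1)
          also have "\<dots> = e \<odot>\<^bsub>M\<^esub> w2 \<oplus>\<^bsub>M\<^esub> (e \<otimes> r) \<odot>\<^bsub>M\<^esub> g"
            using ec w2c wr(2) gc by (simp add: smult_r_distr smult_assoc1)
          also have "(e \<otimes> r) \<odot>\<^bsub>M\<^esub> g = r \<odot>\<^bsub>M\<^esub> (e \<odot>\<^bsub>M\<^esub> g)"
            using ec wr(2) gc by (simp add: smult_assoc1[symmetric] m_comm)
          finally show ?thesis .
        qed
        moreover have "e \<odot>\<^bsub>M\<^esub> w2 \<in> W" using submoduleE(4)[OF W ec wr(1)] .
        moreover have "r \<odot>\<^bsub>M\<^esub> (e \<odot>\<^bsub>M\<^esub> g) \<in> W" using eg submoduleE(4)[OF W wr(2) wq(1)] by simp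
        ultimately show ?thesis using submoduleE(5)[OF W] by simp
      qed
    qed
  qed
qed

end

context module
begin

lemma finsum_in_sub:
  assumes W: "submodule W R M" and A: "finite A" "A \<subseteq> W" and a: "a \<in> A \<rightarrow> carrier R"
  shows "(\<Oplus>\<^bsub>M\<^esub> s \<in> A. a s \<odot>\<^bsub>M\<^esub> s) \<in> W"
  using A a
proof (induction A rule: finite_induct)
  case empty
  then show ?case using submodule_zero[OF module_axioms W] by simp
next
  case (insert x A)
  have Wc: "W \<subseteq> carrier M" using submoduleE(1)[OF W] .
  have xc: "x \<in> carrier M" "a x \<in> carrier R" using insert Wc by auto
  have fc: "(\<lambda>s. a s \<odot>\<^bsub>M\<^esub> s) \<in> A \<rightarrow> carrier M" using insert Wc by auto
  have "(\<Oplus>\<^bsub>M\<^esub> s \<in> insert x A. a s \<odot>\<^bsub>M\<^esub> s) = a x \<odot>\<^bsub>M\<^esub> x \<oplus>\<^bsub>M\<^esub> (\<Oplus>\<^bsub>M\<^esub> s \<in> A. a s \<odot>\<^bsub>M\<^esub> s)"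
    by (rule M.finsum_insert[OF insert(1,2) fc]) (use xc in simp)
  moreover have "a x \<odot>\<^bsub>M\<^esub> x \<in> W" using submoduleE(4)[OF W] xc insert by auto
  moreover have "(\<Oplus>\<^bsub>M\<^esub> s \<in> A. a s \<odot>\<^bsub>M\<^esub> s) \<in> W" using insert by auto
  ultimately show ?case using submoduleE(5)[OF W] by simp
qed

lemma zero_sub: "submodule {\<zero>\<^bsub>M\<^esub>} R M"
  by (rule submoduleI) auto

lemma coord_exists:
  assumes P: "primeideal P R" and fg: "fin_gen_module R M" and supp: "P \<in> Supp R M"
  shows "\<exists>W i0 d. submodule W R M \<and> i0 \<in> carrier M \<and> d \<in> carrier R - P \<and>
     (\<forall>r\<in>carrier R. r \<odot>\<^bsub>M\<^esub> i0 \<in> W \<longrightarrow> r \<in> P) \<and>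
     (\<forall>n\<in>carrier M. \<exists>r\<in>carrier R. d \<odot>\<^bsub>M\<^esub> n \<ominus>\<^bsub>M\<^esub> r \<odot>\<^bsub>M\<^esub> i0 \<in> W)"
proof -
  have Psub: "P \<subseteq> carrier R" using additive_subgroup.a_subset[OF ideal.axioms(1)[OF primeideal.axioms(1)[OF P]]] .
  obtain S where S: "finite S" "S \<subseteq> carrier M"
    and sp: "\<forall>x \<in> carrier M. \<exists>a. a \<in> S \<rightarrow> carrier R \<and> x = (\<Oplus>\<^bsub>M\<^esub> s \<in> S. a s \<odot>\<^bsub>M\<^esub> s)"
    using fg unfolding fin_gen_module_def by blast
  have spanS: "carrier M \<subseteq> nspan S"
  proof
    fix x assume x: "x \<in> carrier M"
    obtain a where a: "a \<in> S \<rightarrow> carrier R" "x = (\<Oplus>\<^bsub>M\<^esub> s \<in> S. a s \<odot>\<^bsub>M\<^esub> s)"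
      using bspec[OF sp x] by (elim exE conjE) blast
    show "x \<in> nspan S" unfolding a(2) by (rule finsum_in_sub[OF nspan_sub[OF S(2)] S(1) nspan_incl a(1)])
  qed
  obtain x0 where x0: "x0 \<in> carrier M" "\<forall>t \<in> carrier R - P. t \<odot>\<^bsub>M\<^esub> x0 \<noteq> \<zero>\<^bsub>M\<^esub>"
    using supp unfolding Supp_def by blast
  have PSc: "PSet P S \<subseteq> carrier M" using PSet_car[OF P S(2)] .
  define Bad where "Bad T \<longleftrightarrow> (\<exists>u \<in> carrier R - P. \<forall>n\<in>carrier M. u \<odot>\<^bsub>M\<^esub> n \<in> nspan (PSet P S \<union> T))" for T
  have notBad0: "\<not> Bad {}"
  proof
    assume "Bad {}"
    then obtain u where u: "u \<in> carrier R - P" "\<forall>n\<in>carrier M. u \<odot>\<^bsub>M\<^esub> n \<in> nspan (PSet P S \<union> {})"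
      unfolding Bad_def by blast
    have "\<forall>g\<in>S. u \<odot>\<^bsub>M\<^esub> g \<in> nspan (PSet P S \<union> {\<zero>\<^bsub>M\<^esub>})"
    proof
      fix g assume "g \<in> S"
      then have "u \<odot>\<^bsub>M\<^esub> g \<in> nspan (PSet P S \<union> {})" using u S(2) by blast
      moreover have "nspan (PSet P S \<union> {}) \<subseteq> nspan (PSet P S \<union> {\<zero>\<^bsub>M\<^esub>})"
        by (rule nspan_mono) (use PSc in auto)
      ultimately show "u \<odot>\<^bsub>M\<^esub> g \<in> nspan (PSet P S \<union> {\<zero>\<^bsub>M\<^esub>})" by blast
    qed
    then obtain v where v: "v \<in> carrier R - P" "\<forall>g\<in>S. v \<odot>\<^bsub>M\<^esub> g \<in> {\<zero>\<^bsub>M\<^esub>}"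
      using nakayama[OF P S] zero_sub u(1) by blast
    have vc: "v \<in> carrier R" using v by simp
    have "S \<subseteq> {z \<in> carrier M. v \<odot>\<^bsub>M\<^esub> z \<in> {\<zero>\<^bsub>M\<^esub>}}" using v S(2) by blast
    then have "nspan S \<subseteq> {z \<in> carrier M. v \<odot>\<^bsub>M\<^esub> z \<in> {\<zero>\<^bsub>M\<^esub>}}"
      by (rule nspan_least[OF preimage_sub[OF zero_sub vc]])
    then have "v \<odot>\<^bsub>M\<^esub> x0 = \<zero>\<^bsub>M\<^esub>" using spanS x0(1) by blast
    then show False using x0(2) v(1) by blast
  qed
  have BadS: "Bad S"
    unfolding Bad_def
  proof (intro bexI ballI)
    show "\<one> \<in> carrier R - P" using one_notin_prime[OF P] by simp
    fix n assume n: "n \<in> carrier M"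
    have "nspan S \<subseteq> nspan (PSet P S \<union> S)" by (rule nspan_mono) (use PSc S(2) in auto)
    then show "\<one> \<odot>\<^bsub>M\<^esub> n \<in> nspan (PSet P S \<union> S)" using spanS n by auto
  qed
  define Fam where "Fam = {T. T \<subseteq> S \<and> \<not> Bad T}"
  have "\<exists>T. T \<in> Fam \<and> (\<forall>T'. T' \<in> Fam \<longrightarrow> card T' \<le> card T)"
  proof (rule ex_has_greatest_nat[where b="card S + 1"])
    show "{} \<in> Fam" unfolding Fam_def using notBad0 by simp
    show "\<forall>y. y \<in> Fam \<longrightarrow> card y < card S + 1"
    proof (intro allI impI)
      fix y assume "y \<in> Fam"
      then have "y \<subseteq> S" unfolding Fam_def by simp
      then have "card y \<le> card S" using card_mono[OF S(1)] by simp
      then show "card y < card S + 1" by simp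
    qed
  qed
  then obtain T where T: "T \<subseteq> S" "\<not> Bad T" and Tmax: "\<And>T'. T' \<subseteq> S \<Longrightarrow> \<not> Bad T' \<Longrightarrow> card T' \<le> card T"
    unfolding Fam_def by blast
  have "T \<noteq> S" using T BadS by blast
  then obtain g where g: "g \<in> S" "g \<notin> T" using T(1) by blast
  have gc: "g \<in> carrier M" using g S(2) by blast
  have Tc: "T \<subseteq> carrier M" using T(1) S(2) by blast
  have fT: "finite T" using T(1) S(1) finite_subset by blast
  have "Bad (insert g T)"
  proof (rule ccontr)
    assume "\<not> Bad (insert g T)"
    then have "card (insert g T) \<le> card T" using Tmax g T(1) by blast
    then show False using g(2) fT by simp
  qed
  then obtain d where d: "d \<in> carrier R - P" "\<forall>n\<in>carrier M. d \<odot>\<^bsub>M\<^esub> n \<in> nspan (PSet P S \<union> insert g T)"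
    unfolding Bad_def by blast
  have dc: "d \<in> carrier R" using d by simp
  define W where "W = nspan (PSet P S \<union> T)"
  have X1c: "PSet P S \<union> T \<subseteq> carrier M" using PSc Tc by blast
  have Wsub: "submodule W R M" unfolding W_def by (rule nspan_sub[OF X1c])
  have Wc: "W \<subseteq> carrier M" using submoduleE(1)[OF Wsub] .
  have char: "nspan ((PSet P S \<union> T) \<union> {r \<odot>\<^bsub>M\<^esub> g | r. r \<in> carrier R}) = {y \<oplus>\<^bsub>M\<^esub> r \<odot>\<^bsub>M\<^esub> g | y r. y \<in> W \<and> r \<in> carrier R}"
    unfolding W_def by (rule span_insert[OF oneideal gc X1c])
  have incl: "nspan (PSet P S \<union> insert g T) \<subseteq> nspan ((PSet P S \<union> T) \<union> {r \<odot>\<^bsub>M\<^esub> g | r. r \<in> carrier R})"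
  proof (rule nspan_mono)
    have "g = \<one> \<odot>\<^bsub>M\<^esub> g" using gc by simp
    then have "g \<in> {r \<odot>\<^bsub>M\<^esub> g | r. r \<in> carrier R}" by blast
    then show "PSet P S \<union> insert g T \<subseteq> (PSet P S \<union> T) \<union> {r \<odot>\<^bsub>M\<^esub> g | r. r \<in> carrier R}" by blast
    show "(PSet P S \<union> T) \<union> {r \<odot>\<^bsub>M\<^esub> g | r. r \<in> carrier R} \<subseteq> carrier M" using X1c gc by auto
  qed
  have dec: "\<exists>y r. y \<in> W \<and> r \<in> carrier R \<and> d \<odot>\<^bsub>M\<^esub> n = y \<oplus>\<^bsub>M\<^esub> r \<odot>\<^bsub>M\<^esub> g" if n: "n \<in> carrier M" for n
  proof -
    have "d \<odot>\<^bsub>M\<^esub> n \<in> {y \<oplus>\<^bsub>M\<^esub> r \<odot>\<^bsub>M\<^esub> g | y r. y \<in> W \<and> r \<in> carrier R}"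
      using d(2) n incl char by blast
    then show ?thesis by blast
  qed
  show ?thesis
  proof (intro exI conjI ballI impI)
    show "submodule W R M" by (rule Wsub)
    show "g \<in> carrier M" by (rule gc)
    show "d \<in> carrier R - P" by (rule d(1))
  next
    fix r assume r: "r \<in> carrier R" and rg: "r \<odot>\<^bsub>M\<^esub> g \<in> W"
    show "r \<in> P"
    proof (rule ccontr)
      assume rP: "r \<notin> P"
      have "Bad T"
        unfolding Bad_def
      proof (intro bexI ballI)
        show "r \<otimes> d \<in> carrier R - P" using primeideal.I_prime[OF P r dc] rP d(1) r dc by auto
        fix n assume n: "n \<in> carrier M"
        obtain y s where ys: "y \<in> W" "s \<in> carrier R" "d \<odot>\<^bsub>M\<^esub> n = y \<oplus>\<^bsub>M\<^esub> s \<odot>\<^bsub>M\<^esub> g" using dec[OF n] by blast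
        have yc: "y \<in> carrier M" using ys Wc by blast
        have "(r \<otimes> d) \<odot>\<^bsub>M\<^esub> n = r \<odot>\<^bsub>M\<^esub> y \<oplus>\<^bsub>M\<^esub> s \<odot>\<^bsub>M\<^esub> (r \<odot>\<^bsub>M\<^esub> g)"
        proof -
          have "(r \<otimes> d) \<odot>\<^bsub>M\<^esub> n = r \<odot>\<^bsub>M\<^esub> (y \<oplus>\<^bsub>M\<^esub> s \<odot>\<^bsub>M\<^esub> g)" using ys(3) r dc n by (simp add: smult_assoc1)
          also have "\<dots> = r \<odot>\<^bsub>M\<^esub> y \<oplus>\<^bsub>M\<^esub> (r \<otimes> s) \<odot>\<^bsub>M\<^esub> g" using r yc ys(2) gc by (simp add: smult_r_distr smult_assoc1)
          also have "(r \<otimes> s) \<odot>\<^bsub>M\<^esub> g = s \<odot>\<^bsub>M\<^esub> (r \<odot>\<^bsub>M\<^esub> g)" using r ys(2) gc by (simp add: smult_assoc1[symmetric] m_comm)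
          finally show ?thesis .
        qed
        moreover have "r \<odot>\<^bsub>M\<^esub> y \<in> W" using submoduleE(4)[OF Wsub r ys(1)] .
        moreover have "s \<odot>\<^bsub>M\<^esub> (r \<odot>\<^bsub>M\<^esub> g) \<in> W" using submoduleE(4)[OF Wsub ys(2) rg] .
        ultimately show "(r \<otimes> d) \<odot>\<^bsub>M\<^esub> n \<in> nspan (PSet P S \<union> T)"
          using submoduleE(5)[OF Wsub] unfolding W_def by simp
      qed
      then show False using T(2) by simp
    qed
  next
    fix n assume n: "n \<in> carrier M"
    obtain y s where ys: "y \<in> W" "s \<in> carrier R" "d \<odot>\<^bsub>M\<^esub> n = y \<oplus>\<^bsub>M\<^esub> s \<odot>\<^bsub>M\<^esub> g" using dec[OF n] by blast
    have yc: "y \<in> carrier M" using ys Wc by blast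
    have "d \<odot>\<^bsub>M\<^esub> n \<ominus>\<^bsub>M\<^esub> s \<odot>\<^bsub>M\<^esub> g = y"
      using ys(3) yc ys(2) gc by (simp add: a_minus_def M.a_assoc M.r_neg)
    then show "\<exists>r\<in>carrier R. d \<odot>\<^bsub>M\<^esub> n \<ominus>\<^bsub>M\<^esub> r \<odot>\<^bsub>M\<^esub> g \<in> W" using ys by blast
  qed
qed

end

lemma (in abelian_group) G1: "x \<in> carrier G \<Longrightarrow> a \<in> carrier G \<Longrightarrow> b \<in> carrier G \<Longrightarrow> (x \<ominus> b) \<ominus> (x \<ominus> a) = a \<ominus> b"
  by (simp add: a_minus_def minus_add a_ac r_neg1 r_neg2 r_neg3)
lemma (in abelian_group) G2: "x \<in> carrier G \<Longrightarrow> y \<in> carrier G \<Longrightarrow> a \<in> carrier G \<Longrightarrow> b \<in> carrier G \<Longrightarrow>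
   (x \<oplus> y) \<ominus> (a \<oplus> b) = (x \<ominus> a) \<oplus> (y \<ominus> b)"
  by (simp add: a_minus_def minus_add a_ac)
lemma (in abelian_group) G3: "a \<in> carrier G \<Longrightarrow> b \<in> carrier G \<Longrightarrow> (a \<oplus> b) \<ominus> a \<ominus> b = \<zero>"
  by (simp add: a_minus_def a_ac r_neg1 r_neg2 r_neg3 r_neg)
lemma (in abelian_group) G4: "a \<in> carrier G \<Longrightarrow> a \<ominus> a = \<zero>"
  by (simp add: a_minus_def r_neg)

lemma (in module) smult_minus_l: "a \<in> carrier R \<Longrightarrow> b \<in> carrier R \<Longrightarrow> x \<in> carrier M \<Longrightarrow>
   (a \<ominus> b) \<odot>\<^bsub>M\<^esub> x = a \<odot>\<^bsub>M\<^esub> x \<ominus>\<^bsub>M\<^esub> b \<odot>\<^bsub>M\<^esub> x"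
  by (simp add: a_minus_def smult_l_distr smult_l_minus)
lemma (in module) smult_minus_r: "a \<in> carrier R \<Longrightarrow> x \<in> carrier M \<Longrightarrow> y \<in> carrier M \<Longrightarrow>
   a \<odot>\<^bsub>M\<^esub> (x \<ominus>\<^bsub>M\<^esub> y) = a \<odot>\<^bsub>M\<^esub> x \<ominus>\<^bsub>M\<^esub> a \<odot>\<^bsub>M\<^esub> y"
  by (simp add: a_minus_def smult_r_distr smult_r_minus)

locale coord = tsetup +
  fixes P W i0 d U0
  assumes P: "primeideal P R" and Wsub: "submodule W R N" and i0: "i0 \<in> carrier N"
    and d: "d \<in> carrier R - P"
    and sat: "\<And>r. r \<in> carrier R \<Longrightarrow> r \<odot>\<^bsub>N\<^esub> i0 \<in> W \<Longrightarrow> r \<in> P"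
    and dec: "\<And>n. n \<in> carrier N \<Longrightarrow> \<exists>r\<in>carrier R. d \<odot>\<^bsub>N\<^esub> n \<ominus>\<^bsub>N\<^esub> r \<odot>\<^bsub>N\<^esub> i0 \<in> W"
    and U0: "submodule U0 R M" and PU0: "P = ann_quot R M U0"
begin

lemma Psub: "P \<subseteq> carrier R"
  using additive_subgroup.a_subset[OF ideal.axioms(1)[OF primeideal.axioms(1)[OF P]]] .
lemma Pminus: "a \<in> P \<Longrightarrow> b \<in> P \<Longrightarrow> a \<ominus> b \<in> P"
  using additive_subgroup.a_closed[OF ideal.axioms(1)[OF primeideal.axioms(1)[OF P]]]
    additive_subgroup.a_inv_closed[OF ideal.axioms(1)[OF primeideal.axioms(1)[OF P]]]
  unfolding a_minus_def by blast
lemma Wc: "W \<subseteq> carrier N" using N.submoduleE(1)[OF Wsub] .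
lemma U0c: "U0 \<subseteq> carrier M" using M.submoduleE(1)[OF U0] .
lemma dc: "d \<in> carrier R" using d by simp

lemma P_kills: "r \<in> P \<Longrightarrow> x \<in> carrier M \<Longrightarrow> r \<odot>\<^bsub>M\<^esub> x \<in> U0"
  using PU0 unfolding ann_quot_def by blast

definition cc where
  "cc n = (SOME r. r \<in> carrier R \<and> d \<odot>\<^bsub>N\<^esub> n \<ominus>\<^bsub>N\<^esub> r \<odot>\<^bsub>N\<^esub> i0 \<in> W)"

lemma cc_prop: "n \<in> carrier N \<Longrightarrow> cc n \<in> carrier R \<and> d \<odot>\<^bsub>N\<^esub> n \<ominus>\<^bsub>N\<^esub> cc n \<odot>\<^bsub>N\<^esub> i0 \<in> W"
  unfolding cc_def by (rule someI_ex) (use dec in blast)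

lemma cc_car: "n \<in> carrier N \<Longrightarrow> cc n \<in> carrier R"
  using cc_prop by blast

lemma cc_uniq:
  assumes n: "n \<in> carrier N" and r: "r \<in> carrier R" and rW: "d \<odot>\<^bsub>N\<^esub> n \<ominus>\<^bsub>N\<^esub> r \<odot>\<^bsub>N\<^esub> i0 \<in> W"
  shows "cc n \<ominus> r \<in> P"
proof -
  have c: "cc n \<in> carrier R" "d \<odot>\<^bsub>N\<^esub> n \<ominus>\<^bsub>N\<^esub> cc n \<odot>\<^bsub>N\<^esub> i0 \<in> W" using cc_prop[OF n] by auto
  have "(d \<odot>\<^bsub>N\<^esub> n \<ominus>\<^bsub>N\<^esub> r \<odot>\<^bsub>N\<^esub> i0) \<ominus>\<^bsub>N\<^esub> (d \<odot>\<^bsub>N\<^esub> n \<ominus>\<^bsub>N\<^esub> cc n \<odot>\<^bsub>N\<^esub> i0) \<in> W"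
    by (rule N.sub_minus[OF Wsub rW c(2)])
  moreover have "(d \<odot>\<^bsub>N\<^esub> n \<ominus>\<^bsub>N\<^esub> r \<odot>\<^bsub>N\<^esub> i0) \<ominus>\<^bsub>N\<^esub> (d \<odot>\<^bsub>N\<^esub> n \<ominus>\<^bsub>N\<^esub> cc n \<odot>\<^bsub>N\<^esub> i0) = (cc n \<ominus> r) \<odot>\<^bsub>N\<^esub> i0"
    using N.G1[of "d \<odot>\<^bsub>N\<^esub> n" "cc n \<odot>\<^bsub>N\<^esub> i0" "r \<odot>\<^bsub>N\<^esub> i0"] N.smult_minus_l[OF c(1) r i0] n r c(1) i0 dc by simp
  ultimately show ?thesis using sat[of "cc n \<ominus> r"] c(1) r by simp
qed

lemma cc_add: "n \<in> carrier N \<Longrightarrow> n' \<in> carrier N \<Longrightarrow> cc (n \<oplus>\<^bsub>N\<^esub> n') \<ominus> (cc n \<oplus> cc n') \<in> P"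
proof -
  assume n: "n \<in> carrier N" and n': "n' \<in> carrier N"
  have c: "cc n \<in> carrier R" "d \<odot>\<^bsub>N\<^esub> n \<ominus>\<^bsub>N\<^esub> cc n \<odot>\<^bsub>N\<^esub> i0 \<in> W" using cc_prop[OF n] by auto
  have c': "cc n' \<in> carrier R" "d \<odot>\<^bsub>N\<^esub> n' \<ominus>\<^bsub>N\<^esub> cc n' \<odot>\<^bsub>N\<^esub> i0 \<in> W" using cc_prop[OF n'] by auto
  have "d \<odot>\<^bsub>N\<^esub> (n \<oplus>\<^bsub>N\<^esub> n') \<ominus>\<^bsub>N\<^esub> (cc n \<oplus> cc n') \<odot>\<^bsub>N\<^esub> i0
     = (d \<odot>\<^bsub>N\<^esub> n \<ominus>\<^bsub>N\<^esub> cc n \<odot>\<^bsub>N\<^esub> i0) \<oplus>\<^bsub>N\<^esub> (d \<odot>\<^bsub>N\<^esub> n' \<ominus>\<^bsub>N\<^esub> cc n' \<odot>\<^bsub>N\<^esub> i0)"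
    using N.G2[of "d \<odot>\<^bsub>N\<^esub> n" "d \<odot>\<^bsub>N\<^esub> n'" "cc n \<odot>\<^bsub>N\<^esub> i0" "cc n' \<odot>\<^bsub>N\<^esub> i0"] n n' c(1) c'(1) i0 dc
    by (simp add: N.smult_r_distr N.smult_l_distr)
  moreover have "\<dots> \<in> W" using N.submoduleE(5)[OF Wsub c(2) c'(2)] .
  ultimately show ?thesis using cc_uniq[of "n \<oplus>\<^bsub>N\<^esub> n'" "cc n \<oplus> cc n'"] n n' c(1) c'(1) by simp
qed

lemma cc_smult: "s \<in> carrier R \<Longrightarrow> n \<in> carrier N \<Longrightarrow> cc (s \<odot>\<^bsub>N\<^esub> n) \<ominus> s \<otimes> cc n \<in> P"
proof -
  assume s: "s \<in> carrier R" and n: "n \<in> carrier N"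
  have c: "cc n \<in> carrier R" "d \<odot>\<^bsub>N\<^esub> n \<ominus>\<^bsub>N\<^esub> cc n \<odot>\<^bsub>N\<^esub> i0 \<in> W" using cc_prop[OF n] by auto
  have "d \<odot>\<^bsub>N\<^esub> (s \<odot>\<^bsub>N\<^esub> n) \<ominus>\<^bsub>N\<^esub> (s \<otimes> cc n) \<odot>\<^bsub>N\<^esub> i0 = s \<odot>\<^bsub>N\<^esub> (d \<odot>\<^bsub>N\<^esub> n \<ominus>\<^bsub>N\<^esub> cc n \<odot>\<^bsub>N\<^esub> i0)"
  proof -
    have "d \<odot>\<^bsub>N\<^esub> (s \<odot>\<^bsub>N\<^esub> n) = s \<odot>\<^bsub>N\<^esub> (d \<odot>\<^bsub>N\<^esub> n)"
      using s n dc by (simp add: N.smult_assoc1[symmetric] R.m_comm)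
    moreover have "(s \<otimes> cc n) \<odot>\<^bsub>N\<^esub> i0 = s \<odot>\<^bsub>N\<^esub> (cc n \<odot>\<^bsub>N\<^esub> i0)" using s c(1) i0 by (simp add: N.smult_assoc1)
    ultimately show ?thesis using N.smult_minus_r[of s "d \<odot>\<^bsub>N\<^esub> n" "cc n \<odot>\<^bsub>N\<^esub> i0"] s n dc c(1) i0 by simp
  qed
  moreover have "\<dots> \<in> W" using N.submoduleE(4)[OF Wsub s c(2)] .
  ultimately show ?thesis using cc_uniq[of "s \<odot>\<^bsub>N\<^esub> n" "s \<otimes> cc n"] s n c(1) by simp
qed

lemma cc_i0: "cc i0 \<notin> P"
proof
  assume ci: "cc i0 \<in> P"
  have "d \<odot>\<^bsub>N\<^esub> i0 \<ominus>\<^bsub>N\<^esub> d \<odot>\<^bsub>N\<^esub> i0 \<in> W"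
    using N.G4[of "d \<odot>\<^bsub>N\<^esub> i0"] submodule_zero[OF N.module_axioms Wsub] i0 dc by simp
  then have "cc i0 \<ominus> d \<in> P" using cc_uniq[OF i0 dc] by simp
  then have "cc i0 \<ominus> (cc i0 \<ominus> d) \<in> P" using Pminus ci by blast
  moreover have "cc i0 \<ominus> (cc i0 \<ominus> d) = d" using R.H6 cc_car[OF i0] dc by blast
  ultimately show False using d by simp
qed

end

context coord
begin

interpretation T: module R T by (rule T_module)

definition bb where "bb z = cc (snd z) \<odot>\<^bsub>M\<^esub> fst z"

definition Lm where "Lm f = (\<Oplus>\<^bsub>M\<^esub> z \<in> {z. f z \<noteq> \<zero>}. f z \<odot>\<^bsub>M\<^esub> bb z)"

lemma bb_car: "z \<in> carrier M \<times> carrier N \<Longrightarrow> bb z \<in> carrier M"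
  unfolding bb_def using cc_car by auto

lemma supp_F: "f \<in> carrier F \<Longrightarrow> finite {z. f z \<noteq> \<zero>} \<and> {z. f z \<noteq> \<zero>} \<subseteq> carrier M \<times> carrier N"
  unfolding free_mod_simps mem_Collect_eq by blast

lemma Lm_big:
  assumes f: "f \<in> carrier F" and Z: "finite Z" "{z. f z \<noteq> \<zero>} \<subseteq> Z" "Z \<subseteq> carrier M \<times> carrier N"
  shows "Lm f = (\<Oplus>\<^bsub>M\<^esub> z \<in> Z. f z \<odot>\<^bsub>M\<^esub> bb z)"
  unfolding Lm_def
proof (rule M.add.finprod_mono_neutral_cong_left[OF Z(1) Z(2)])
  fix i assume "i \<in> Z - {z. f z \<noteq> \<zero>}"
  then have "f i = \<zero>" "i \<in> carrier M \<times> carrier N" using Z by auto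
  then show "f i \<odot>\<^bsub>M\<^esub> bb i = \<zero>\<^bsub>M\<^esub>" using bb_car by simp
next
  show "(\<lambda>z. f z \<odot>\<^bsub>M\<^esub> bb z) \<in> Z \<rightarrow> carrier M" using Z(3) bb_car Fcar[OF f] by auto
qed simp

lemma Lm_car: "f \<in> carrier F \<Longrightarrow> Lm f \<in> carrier M"
  unfolding Lm_def
proof (rule M.finsum_closed)
  assume f: "f \<in> carrier F"
  show "(\<lambda>z. f z \<odot>\<^bsub>M\<^esub> bb z) \<in> {z. f z \<noteq> \<zero>} \<rightarrow> carrier M"
  proof
    fix z assume "z \<in> {z. f z \<noteq> \<zero>}"
    then have "z \<in> carrier M \<times> carrier N" using supp_F[OF f] by blast
    then show "f z \<odot>\<^bsub>M\<^esub> bb z \<in> carrier M" using M.smult_closed[OF Fcar[OF f] bb_car] by blast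
  qed
qed

lemma Lm_add:
  assumes f: "f \<in> carrier F" and g: "g \<in> carrier F"
  shows "Lm (\<lambda>z. f z \<oplus> g z) = Lm f \<oplus>\<^bsub>M\<^esub> Lm g"
proof -
  define Z where "Z = {z. f z \<noteq> \<zero>} \<union> {z. g z \<noteq> \<zero>}"
  have Zf: "finite Z" "Z \<subseteq> carrier M \<times> carrier N" unfolding Z_def using supp_F[OF f] supp_F[OF g] by auto
  have s1: "{z. f z \<oplus> g z \<noteq> \<zero>} \<subseteq> Z" unfolding Z_def using f g Fcar by auto
  have fc: "(\<lambda>z. f z \<odot>\<^bsub>M\<^esub> bb z) \<in> Z \<rightarrow> carrier M" "(\<lambda>z. g z \<odot>\<^bsub>M\<^esub> bb z) \<in> Z \<rightarrow> carrier M"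
    using Zf bb_car Fcar[OF f] Fcar[OF g] by auto
  have "Lm (\<lambda>z. f z \<oplus> g z) = (\<Oplus>\<^bsub>M\<^esub> z \<in> Z. (f z \<oplus> g z) \<odot>\<^bsub>M\<^esub> bb z)"
    by (rule Lm_big[OF F_addc[OF f g] Zf(1) s1 Zf(2)])
  also have "\<dots> = (\<Oplus>\<^bsub>M\<^esub> z \<in> Z. f z \<odot>\<^bsub>M\<^esub> bb z \<oplus>\<^bsub>M\<^esub> g z \<odot>\<^bsub>M\<^esub> bb z)"
    by (rule M.finsum_cong') (use Zf bb_car Fcar[OF f] Fcar[OF g] M.smult_l_distr in auto)
  also have "\<dots> = (\<Oplus>\<^bsub>M\<^esub> z \<in> Z. f z \<odot>\<^bsub>M\<^esub> bb z) \<oplus>\<^bsub>M\<^esub> (\<Oplus>\<^bsub>M\<^esub> z \<in> Z. g z \<odot>\<^bsub>M\<^esub> bb z)"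
    by (rule M.finsum_addf[OF fc])
  also have "\<dots> = Lm f \<oplus>\<^bsub>M\<^esub> Lm g"
    using Lm_big[OF f Zf(1) _ Zf(2)] Lm_big[OF g Zf(1) _ Zf(2)] unfolding Z_def by auto
  finally show ?thesis .
qed

lemma Lm_smult:
  assumes r: "r \<in> carrier R" and f: "f \<in> carrier F"
  shows "Lm (\<lambda>z. r \<otimes> f z) = r \<odot>\<^bsub>M\<^esub> Lm f"
proof -
  define Z where "Z = {z. f z \<noteq> \<zero>}"
  have Zf: "finite Z" "Z \<subseteq> carrier M \<times> carrier N" unfolding Z_def using supp_F[OF f] by auto
  have s1: "{z. r \<otimes> f z \<noteq> \<zero>} \<subseteq> Z" unfolding Z_def using f r Fcar by auto
  have fc: "(\<lambda>z. f z \<odot>\<^bsub>M\<^esub> bb z) \<in> Z \<rightarrow> carrier M"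
    using Zf bb_car Fcar[OF f] by auto
  have "Lm (\<lambda>z. r \<otimes> f z) = (\<Oplus>\<^bsub>M\<^esub> z \<in> Z. (r \<otimes> f z) \<odot>\<^bsub>M\<^esub> bb z)"
    by (rule Lm_big[OF F_smultc[OF r f] Zf(1) s1 Zf(2)])
  also have "\<dots> = (\<Oplus>\<^bsub>M\<^esub> z \<in> Z. r \<odot>\<^bsub>M\<^esub> (f z \<odot>\<^bsub>M\<^esub> bb z))"
    by (rule M.finsum_cong') (use Zf bb_car Fcar[OF f] r M.smult_assoc1 in auto)
  also have "\<dots> = r \<odot>\<^bsub>M\<^esub> (\<Oplus>\<^bsub>M\<^esub> z \<in> Z. f z \<odot>\<^bsub>M\<^esub> bb z)"
    by (rule M.finsum_smult_ldistr[symmetric, OF Zf(1) r fc])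
  also have "\<dots> = r \<odot>\<^bsub>M\<^esub> Lm f" unfolding Z_def Lm_def by simp
  finally show ?thesis .
qed

lemma Lm_zero: "Lm (\<lambda>z. \<zero>) = \<zero>\<^bsub>M\<^esub>"
  unfolding Lm_def by simp

lemma Lm_neg: "f \<in> carrier F \<Longrightarrow> Lm (\<lambda>z. \<ominus> f z) = \<ominus>\<^bsub>M\<^esub> Lm f"
proof -
  assume f: "f \<in> carrier F"
  have "(\<lambda>z. \<ominus> f z) = (\<lambda>z. (\<ominus> \<one>) \<otimes> f z)" using Fcar[OF f] by (simp add: R.l_minus)
  then have "Lm (\<lambda>z. \<ominus> f z) = (\<ominus> \<one>) \<odot>\<^bsub>M\<^esub> Lm f" using Lm_smult[of "\<ominus> \<one>" f] f by simp
  then show ?thesis using M.smult_l_minus[of \<one> "Lm f"] Lm_car[OF f] by simp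
qed

lemma Lm_sub: "f \<in> carrier F \<Longrightarrow> g \<in> carrier F \<Longrightarrow> Lm (\<lambda>z. f z \<ominus> g z) = Lm f \<ominus>\<^bsub>M\<^esub> Lm g"
  using Lm_add[OF _ F_negc, of f g] Lm_neg[of g] by (simp add: a_minus_def)

lemma Lm_delta: "m \<in> carrier M \<Longrightarrow> n \<in> carrier N \<Longrightarrow> Lm (delta R (m, n)) = cc n \<odot>\<^bsub>M\<^esub> m"
proof -
  assume m: "m \<in> carrier M" and n: "n \<in> carrier N"
  have "Lm (delta R (m, n)) = (\<Oplus>\<^bsub>M\<^esub> z \<in> {(m, n)}. delta R (m, n) z \<odot>\<^bsub>M\<^esub> bb z)"
    by (rule Lm_big[OF delta_car[OF m n]]) (use m n in \<open>auto simp: delta_def\<close>)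
  also have "\<dots> = \<one> \<odot>\<^bsub>M\<^esub> bb (m, n)" using bb_car m n by (simp add: delta_def)
  finally show ?thesis using M.smult_closed[OF cc_car[OF n] m] by (simp add: bb_def)
qed

definition V where "V = {f \<in> carrier F. Lm f \<in> U0}"

lemma V_sub: "submodule V R F"
proof (rule F.submoduleI)
  show "V \<subseteq> carrier F" unfolding V_def by blast
  show "\<zero>\<^bsub>F\<^esub> \<in> V" unfolding V_def F_zero using Lm_zero F_zeroc submodule_zero[OF M.module_axioms U0] by simp
next
  fix a assume "a \<in> V"
  then have a: "a \<in> carrier F" "Lm a \<in> U0" unfolding V_def by auto
  show "\<ominus>\<^bsub>F\<^esub> a \<in> V" unfolding V_def F_neg[OF a(1)]
    using Lm_neg[OF a(1)] M.submoduleE(3)[OF U0 a(2)] F_negc[OF a(1)] by simp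
next
  fix a b assume "a \<in> V" "b \<in> V"
  then have a: "a \<in> carrier F" "Lm a \<in> U0" and b: "b \<in> carrier F" "Lm b \<in> U0" unfolding V_def by auto
  show "a \<oplus>\<^bsub>F\<^esub> b \<in> V" unfolding V_def F_add
    using Lm_add[OF a(1) b(1)] M.submoduleE(5)[OF U0 a(2) b(2)] F_addc[OF a(1) b(1)] by simp
next
  fix r a assume r: "r \<in> carrier R" and "a \<in> V"
  then have a: "a \<in> carrier F" "Lm a \<in> U0" unfolding V_def by auto
  show "r \<odot>\<^bsub>F\<^esub> a \<in> V" unfolding V_def F_smult
    using Lm_smult[OF r a(1)] M.submoduleE(4)[OF U0 r a(2)] F_smultc[OF r a(1)] by simp
qed

lemma rels_V: "tensor_rels R M N \<subseteq> V"
proof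
  fix x assume "x \<in> tensor_rels R M N"
  then have xF: "x \<in> carrier F" using rels_car by blast
  have U0z: "\<zero>\<^bsub>M\<^esub> \<in> U0" using submodule_zero[OF M.module_axioms U0] .
  have "Lm x \<in> U0" using \<open>x \<in> tensor_rels R M N\<close> unfolding tensor_rels_def
  proof (elim UnE CollectE exE conjE)
    fix m m' n assume mn: "m \<in> carrier M" "m' \<in> carrier M" "n \<in> carrier N"
      and x: "x = (\<lambda>z. delta R (m \<oplus>\<^bsub>M\<^esub> m', n) z \<ominus> delta R (m, n) z \<ominus> delta R (m', n) z)"
    have d: "delta R (m \<oplus>\<^bsub>M\<^esub> m', n) \<in> carrier F" "delta R (m, n) \<in> carrier F" "delta R (m', n) \<in> carrier F"
      using mn by (auto intro!: delta_car)
    have "Lm x = cc n \<odot>\<^bsub>M\<^esub> (m \<oplus>\<^bsub>M\<^esub> m') \<ominus>\<^bsub>M\<^esub> cc n \<odot>\<^bsub>M\<^esub> m \<ominus>\<^bsub>M\<^esub> cc n \<odot>\<^bsub>M\<^esub> m'"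
      unfolding x using Lm_sub[OF F_sub_car[OF d(1,2)] d(3)] Lm_sub[OF d(1,2)] Lm_delta mn by simp
    also have "\<dots> = \<zero>\<^bsub>M\<^esub>" using M.G3[of "cc n \<odot>\<^bsub>M\<^esub> m" "cc n \<odot>\<^bsub>M\<^esub> m'"] mn cc_car[OF mn(3)]
      by (simp add: M.smult_r_distr)
    finally show "Lm x \<in> U0" using U0z by simp
  next
    fix m n n' assume mn: "m \<in> carrier M" "n \<in> carrier N" "n' \<in> carrier N"
      and x: "x = (\<lambda>z. delta R (m, n \<oplus>\<^bsub>N\<^esub> n') z \<ominus> delta R (m, n) z \<ominus> delta R (m, n') z)"
    have d: "delta R (m, n \<oplus>\<^bsub>N\<^esub> n') \<in> carrier F" "delta R (m, n) \<in> carrier F" "delta R (m, n') \<in> carrier F"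
      using mn by (auto intro!: delta_car)
    have c: "cc (n \<oplus>\<^bsub>N\<^esub> n') \<in> carrier R" "cc n \<in> carrier R" "cc n' \<in> carrier R"
      using cc_car mn by auto
    have "Lm x = cc (n \<oplus>\<^bsub>N\<^esub> n') \<odot>\<^bsub>M\<^esub> m \<ominus>\<^bsub>M\<^esub> cc n \<odot>\<^bsub>M\<^esub> m \<ominus>\<^bsub>M\<^esub> cc n' \<odot>\<^bsub>M\<^esub> m"
      unfolding x using Lm_sub[OF F_sub_car[OF d(1,2)] d(3)] Lm_sub[OF d(1,2)] Lm_delta mn by simp
    also have "\<dots> = (cc (n \<oplus>\<^bsub>N\<^esub> n') \<ominus> cc n \<ominus> cc n') \<odot>\<^bsub>M\<^esub> m"
      using c mn by (simp add: M.smult_minus_l)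
    also have "cc (n \<oplus>\<^bsub>N\<^esub> n') \<ominus> cc n \<ominus> cc n' = cc (n \<oplus>\<^bsub>N\<^esub> n') \<ominus> (cc n \<oplus> cc n')"
      using R.H5[OF c] by simp
    finally show "Lm x \<in> U0" using P_kills[OF cc_add[OF mn(2,3)] mn(1)] by simp
  next
    fix r m n assume mn: "r \<in> carrier R" "m \<in> carrier M" "n \<in> carrier N"
      and x: "x = (\<lambda>z. delta R (r \<odot>\<^bsub>M\<^esub> m, n) z \<ominus> r \<otimes> delta R (m, n) z)"
    have d: "delta R (r \<odot>\<^bsub>M\<^esub> m, n) \<in> carrier F" "delta R (m, n) \<in> carrier F"
      using mn by (auto intro!: delta_car)
    have "Lm x = cc n \<odot>\<^bsub>M\<^esub> (r \<odot>\<^bsub>M\<^esub> m) \<ominus>\<^bsub>M\<^esub> r \<odot>\<^bsub>M\<^esub> (cc n \<odot>\<^bsub>M\<^esub> m)"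
      unfolding x using Lm_sub[OF d(1) F_smultc[OF mn(1) d(2)]] Lm_smult[OF mn(1) d(2)] Lm_delta mn by simp
    also have "\<dots> = \<zero>\<^bsub>M\<^esub>"
    proof -
      have "cc n \<odot>\<^bsub>M\<^esub> (r \<odot>\<^bsub>M\<^esub> m) = r \<odot>\<^bsub>M\<^esub> (cc n \<odot>\<^bsub>M\<^esub> m)"
        using mn cc_car[OF mn(3)] by (simp add: M.smult_assoc1[symmetric] R.m_comm)
      then show ?thesis using M.G4 mn cc_car[OF mn(3)] by simp
    qed
    finally show "Lm x \<in> U0" using U0z by simp
  next
    fix r m n assume mn: "r \<in> carrier R" "m \<in> carrier M" "n \<in> carrier N"
      and x: "x = (\<lambda>z. delta R (m, r \<odot>\<^bsub>N\<^esub> n) z \<ominus> r \<otimes> delta R (m, n) z)"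
    have d: "delta R (m, r \<odot>\<^bsub>N\<^esub> n) \<in> carrier F" "delta R (m, n) \<in> carrier F"
      using mn by (auto intro!: delta_car)
    have c: "cc (r \<odot>\<^bsub>N\<^esub> n) \<in> carrier R" "cc n \<in> carrier R" using cc_car mn by auto
    have "Lm x = cc (r \<odot>\<^bsub>N\<^esub> n) \<odot>\<^bsub>M\<^esub> m \<ominus>\<^bsub>M\<^esub> r \<odot>\<^bsub>M\<^esub> (cc n \<odot>\<^bsub>M\<^esub> m)"
      unfolding x using Lm_sub[OF d(1) F_smultc[OF mn(1) d(2)]] Lm_smult[OF mn(1) d(2)] Lm_delta mn by simp
    also have "\<dots> = (cc (r \<odot>\<^bsub>N\<^esub> n) \<ominus> r \<otimes> cc n) \<odot>\<^bsub>M\<^esub> m"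
      using c mn by (simp add: M.smult_minus_l M.smult_assoc1)
    finally show "Lm x \<in> U0" using P_kills[OF cc_smult[OF mn(1,3)] mn(2)] by simp
  qed
  then show "x \<in> V" unfolding V_def using xF by simp
qed

lemma K_V: "K \<subseteq> V" by (rule K_least[OF V_sub rels_V])

definition UT where "UT = cls ` V"

lemma UT_mem: "g \<in> carrier F \<Longrightarrow> cls g \<in> UT \<Longrightarrow> g \<in> V"
proof -
  assume g: "g \<in> carrier F" and "cls g \<in> UT"
  then obtain f where f: "f \<in> V" "cls g = cls f" unfolding UT_def by blast
  have fF: "f \<in> carrier F" using f V_def by blast
  have k: "(\<lambda>z. g z \<ominus> f z) \<in> V" using cls_eq_iff[OF g fF] f(2) K_V by blast
  have "g = (\<lambda>z. (g z \<ominus> f z) \<oplus> f z)" using R.H7 Fcar[OF g] Fcar[OF fF] by auto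
  then have "Lm g = Lm (\<lambda>z. g z \<ominus> f z) \<oplus>\<^bsub>M\<^esub> Lm f" using Lm_add[OF F_sub_car[OF g fF] fF] by simp
  moreover have "Lm (\<lambda>z. g z \<ominus> f z) \<in> U0" "Lm f \<in> U0" using k f(1) unfolding V_def by auto
  ultimately show "g \<in> V" using M.submoduleE(5)[OF U0] g unfolding V_def by simp
qed

lemma UT_sub: "submodule UT R T"
proof (rule T.submoduleI)
  show "UT \<subseteq> carrier T" unfolding UT_def T_car V_def by blast
  have "(\<lambda>z. \<zero>) \<in> V" using V_sub F_zero sub_zero by simp
  then show "\<zero>\<^bsub>T\<^esub> \<in> UT" unfolding UT_def T_zero by blast
next
  fix a assume "a \<in> UT"
  then obtain f where f: "f \<in> V" "a = cls f" unfolding UT_def by blast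
  have fF: "f \<in> carrier F" using f V_def by blast
  have ac: "a \<in> carrier T" using f fF T_car by blast
  have "\<ominus>\<^bsub>T\<^esub> a = (\<ominus> \<one>) \<odot>\<^bsub>T\<^esub> a" using T.smult_l_minus[of \<one> a] ac by simp
  also have "\<dots> = cls (\<lambda>z. (\<ominus> \<one>) \<otimes> f z)" using T_smult[of "\<ominus> \<one>" f] fF f(2) by simp
  finally have e: "\<ominus>\<^bsub>T\<^esub> a = cls (\<lambda>z. (\<ominus> \<one>) \<otimes> f z)" .
  have "(\<lambda>z. (\<ominus> \<one>) \<otimes> f z) \<in> V" using F.submoduleE(4)[OF V_sub, of "\<ominus> \<one>" f] f F_smult by simp
  then show "\<ominus>\<^bsub>T\<^esub> a \<in> UT" unfolding UT_def e by blast
next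
  fix a b assume "a \<in> UT" "b \<in> UT"
  then obtain f g where f: "f \<in> V" "a = cls f" and g: "g \<in> V" "b = cls g" unfolding UT_def by blast
  have fF: "f \<in> carrier F" "g \<in> carrier F" using f g V_def by auto
  have "(\<lambda>z. f z \<oplus> g z) \<in> V" using F.submoduleE(5)[OF V_sub f(1) g(1)] F_add by simp
  then show "a \<oplus>\<^bsub>T\<^esub> b \<in> UT" unfolding UT_def f(2) g(2) T_add[OF fF] by blast
next
  fix r a assume r: "r \<in> carrier R" and "a \<in> UT"
  then obtain f where f: "f \<in> V" "a = cls f" unfolding UT_def by blast
  have fF: "f \<in> carrier F" using f V_def by blast
  have "(\<lambda>z. r \<otimes> f z) \<in> V" using F.submoduleE(4)[OF V_sub r f(1)] F_smult by simp
  then show "r \<odot>\<^bsub>T\<^esub> a \<in> UT" unfolding UT_def f(2) T_smult[OF r fF] by blast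
qed

lemma UT_ann: "ann_quot R T UT = P"
proof (intro equalityI subsetI)
  fix r assume "r \<in> ann_quot R T UT"
  then have r: "r \<in> carrier R" and rT: "\<And>x. x \<in> carrier T \<Longrightarrow> r \<odot>\<^bsub>T\<^esub> x \<in> UT"
    unfolding ann_quot_def by blast+
  have "(r \<otimes> cc i0) \<in> ann_quot R M U0"
    unfolding ann_quot_def
  proof (intro CollectI conjI ballI)
    show "r \<otimes> cc i0 \<in> carrier R" using r cc_car[OF i0] by simp
    fix m assume m: "m \<in> carrier M"
    have dF: "delta R (m, i0) \<in> carrier F" using delta_car[OF m i0] .
    have "r \<odot>\<^bsub>T\<^esub> et m i0 \<in> UT" using rT et_car[OF m i0] by blast
    then have "cls (\<lambda>z. r \<otimes> delta R (m, i0) z) \<in> UT" using T_smult[OF r dF] by simp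
    then have "(\<lambda>z. r \<otimes> delta R (m, i0) z) \<in> V" using UT_mem F_smultc[OF r dF] by blast
    then have "Lm (\<lambda>z. r \<otimes> delta R (m, i0) z) \<in> U0" unfolding V_def by blast
    moreover have "Lm (\<lambda>z. r \<otimes> delta R (m, i0) z) = (r \<otimes> cc i0) \<odot>\<^bsub>M\<^esub> m"
      using Lm_smult[OF r dF] Lm_delta[OF m i0] r cc_car[OF i0] m by (simp add: M.smult_assoc1)
    ultimately show "(r \<otimes> cc i0) \<odot>\<^bsub>M\<^esub> m \<in> U0" by simp
  qed
  then have "r \<otimes> cc i0 \<in> P" using PU0 by simp
  then show "r \<in> P" using primeideal.I_prime[OF P r cc_car[OF i0]] cc_i0 by blast
next
  fix r assume rP: "r \<in> P"
  have r: "r \<in> carrier R" using rP Psub by blast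
  show "r \<in> ann_quot R T UT"
    unfolding ann_quot_def
  proof (intro CollectI conjI ballI)
    show "r \<in> carrier R" by (rule r)
    fix x assume "x \<in> carrier T"
    then obtain f where f: "f \<in> carrier F" "x = cls f" by (auto simp: T_car)
    have "Lm (\<lambda>z. r \<otimes> f z) \<in> U0" using Lm_smult[OF r f(1)] P_kills[OF rP Lm_car[OF f(1)]] by simp
    then have "(\<lambda>z. r \<otimes> f z) \<in> V" unfolding V_def using F_smultc[OF r f(1)] by simp
    then show "r \<odot>\<^bsub>T\<^esub> x \<in> UT" unfolding UT_def f(2) T_smult[OF r f(1)] by blast
  qed
qed

lemma dir2: "P \<in> Att R T"
  unfolding Att_def using P UT_sub UT_ann by blast

end

theorem lemma2p12:
  fixes R :: "('a, 'r) ring_scheme"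
    and M :: "('a, 'm, 'x) module_scheme"
    and N :: "('a, 'n, 'y) module_scheme"
  assumes "cring R" and "noetherian_ring R"
    and "module R M" and "module R N"
    and "fin_gen_module R N"
  shows "Att R (tensor R M N) = Att R M \<inter> Supp R N"
proof -
  interpret t: tsetup R M N
    using assms by (simp add: tsetup_def)
  show ?thesis
  proof (intro equalityI subsetI)
    fix P assume "P \<in> Att R (tensor R M N)"
    then obtain U where P: "primeideal P R" and U: "submodule U R (tensor R M N)" and PU: "P = ann_quot R (tensor R M N) U"
      unfolding Att_def by blast
    have "P \<in> Att R M" by (rule t.dir1_att[OF P U PU])
    moreover have "P \<in> Supp R N" by (rule t.dir1_supp[OF assms(5) P U PU])
    ultimately show "P \<in> Att R M \<inter> Supp R N" by blast
  next
    fix P assume "P \<in> Att R M \<inter> Supp R N"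
    then obtain U0 where P: "primeideal P R" and U0: "submodule U0 R M" and PU0: "P = ann_quot R M U0"
      and supp: "P \<in> Supp R N"
      unfolding Att_def by blast
    obtain W i0 d where W: "submodule W R N" "i0 \<in> carrier N" "d \<in> carrier R - P"
      "\<forall>r\<in>carrier R. r \<odot>\<^bsub>N\<^esub> i0 \<in> W \<longrightarrow> r \<in> P"
      "\<forall>n\<in>carrier N. \<exists>r\<in>carrier R. d \<odot>\<^bsub>N\<^esub> n \<ominus>\<^bsub>N\<^esub> r \<odot>\<^bsub>N\<^esub> i0 \<in> W"
      using t.N.coord_exists[OF P assms(5) supp] by blast
    interpret c: coord R M N P W i0 d U0
      by (rule coord.intro[OF t.tsetup_axioms], rule coord_axioms.intro) (use P W U0 PU0 in auto)
    show "P \<in> Att R (tensor R M N)" by (rule c.dir2)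
  qed
qed

end
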